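(* There is a constant $C$ such that for every $N\ge 2$ there exists an exact quantum query algorithm (in the model described in the context) that, for every non-decreasing $x\in\{0,1\}^N$ with $x_{N-1}=1$, outputs $f(x)=\min\{0\le i<N: x_i=1\}$ with certainty and uses at most $\log_3(N)+C$ queries.
   Context: Quantum query model: the algorithm acts on a Hilbert space with orthonormal basis $\{|z;i\rangle : z,i \text{ non-negative integers}\}$. For an input $x\in\{0,1\}^N$ the oracle is the unitary $O_x|z;i\rangle=(-1)^{x_i}|z;i\rangle$ if $0\le i<N$ and $O_x|z;i\rangle=|z;i\rangle$ if $i\ge N$. A quantum algorithm with $T$ queries is a unitary $(U O_x)^T U$ for a fixed unitary $U$ independent of $x$, applied to $|0\rangle$, followed by a measurement in the computational basis and reading of an output register. It is exact if for every admissible input the output equals the correct answer with probability 1. *)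

theory Defs
  imports Complex_Main
begin

text \<open>Basis states |z;i> are indexed by pairs (z,i) of naturals. The algorithm acts on the span of a finite set B of
  basis states (containing |0;0>); outside B the unitary is the identity.\<close>

type_synonym state = "nat \<times> nat \<Rightarrow> complex"

definition ket :: "nat \<times> nat \<Rightarrow> state" where
  "ket a = (\<lambda>b. if b = a then 1 else 0)"

definition apply_mat :: "(nat \<times> nat) set \<Rightarrow> (nat \<times> nat \<Rightarrow> nat \<times> nat \<Rightarrow> complex) \<Rightarrow> state \<Rightarrow> state" where
  "apply_mat B U v = (\<lambda>a. if a \<in> B then (\<Sum>b\<in>B. U a b * v b) else v a)"

definition unitary_on :: "(nat \<times> nat) set \<Rightarrow> (nat \<times> nat \<Rightarrow> nat \<times> nat \<Rightarrow> complex) \<Rightarrow> bool" where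
  "unitary_on B U \<longleftrightarrow> (\<forall>a\<in>B. \<forall>b\<in>B. (\<Sum>c\<in>B. cnj (U c a) * U c b) = (if a = b then 1 else 0))"

definition phase_oracle :: "nat \<Rightarrow> (nat \<Rightarrow> bool) \<Rightarrow> state \<Rightarrow> state" where
  "phase_oracle N x v = (\<lambda>(z, i). (if i < N \<and> x i then -1 else 1) * v (z, i))"

definition run :: "(nat \<times> nat) set \<Rightarrow> (nat \<times> nat \<Rightarrow> nat \<times> nat \<Rightarrow> complex) \<Rightarrow> nat \<Rightarrow> (nat \<Rightarrow> bool) \<Rightarrow> nat \<Rightarrow> state" where
  "run B U N x T = ((apply_mat B U \<circ> phase_oracle N x) ^^ T) (apply_mat B U (ket (0, 0)))"

text \<open>Exactness: measuring in the computational basis, every outcome a with nonzero amplitude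
  yields output (read by out) equal to the correct answer.\<close>
definition exact_on :: "(nat \<times> nat) set \<Rightarrow> (nat \<times> nat \<Rightarrow> nat \<times> nat \<Rightarrow> complex) \<Rightarrow> nat \<Rightarrow> nat
    \<Rightarrow> (nat \<times> nat \<Rightarrow> 'o) \<Rightarrow> ((nat \<Rightarrow> bool) \<Rightarrow> bool) \<Rightarrow> ((nat \<Rightarrow> bool) \<Rightarrow> 'o) \<Rightarrow> bool" where
  "exact_on B U N T out adm f \<longleftrightarrow>
     (\<forall>x. adm x \<longrightarrow> (\<forall>a. run B U N x T a \<noteq> 0 \<longrightarrow> out a = f x))"

definition monotone_input :: "nat \<Rightarrow> (nat \<Rightarrow> bool) \<Rightarrow> bool" where
  "monotone_input N x \<longleftrightarrow> (\<forall>i j. i \<le> j \<and> j < N \<and> x i \<longrightarrow> x j) \<and> x (N - 1)"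

definition first_one :: "nat \<Rightarrow> (nat \<Rightarrow> bool) \<Rightarrow> nat" where
  "first_one N x = (LEAST i. i < N \<and> x i)"

end

theory Submission
  imports Defs "HOL-Library.Nat_Bijection"
begin

definition ipr :: "'a set \<Rightarrow> ('a \<Rightarrow> real) \<Rightarrow> ('a \<Rightarrow> real) \<Rightarrow> real" where
  "ipr B u v = (\<Sum>a\<in>B. u a * v a)"
definition suppB :: "'a set \<Rightarrow> ('a \<Rightarrow> real) \<Rightarrow> bool" where
  "suppB B v \<longleftrightarrow> (\<forall>a. a \<notin> B \<longrightarrow> v a = 0)"
definition mvr :: "'a set \<Rightarrow> ('a \<Rightarrow> 'a \<Rightarrow> real) \<Rightarrow> ('a \<Rightarrow> real) \<Rightarrow> ('a \<Rightarrow> real)" where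
  "mvr B M v = (\<lambda>a. if a \<in> B then (\<Sum>b\<in>B. M a b * v b) else 0)"
definition orthr :: "'a set \<Rightarrow> ('a \<Rightarrow> 'a \<Rightarrow> real) \<Rightarrow> bool" where
  "orthr B M \<longleftrightarrow> (\<forall>a\<in>B. \<forall>b\<in>B. (\<Sum>c\<in>B. M c a * M c b) = (if a = b then 1 else 0))"
definition compr :: "'a set \<Rightarrow> ('a \<Rightarrow> 'a \<Rightarrow> real) \<Rightarrow> ('a \<Rightarrow> 'a \<Rightarrow> real) \<Rightarrow> ('a \<Rightarrow> 'a \<Rightarrow> real)" where
  "compr B M1 M2 = (\<lambda>a b. \<Sum>c\<in>B. M1 a c * M2 c b)"

lemma ipr_comm: "ipr B u v = ipr B v u"
  unfolding ipr_def by (simp add: mult.commute)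

lemma suppB_mvr: "suppB B (mvr B M v)"
  unfolding suppB_def mvr_def by simp

lemma mvr_comp:
  assumes "finite B"
  shows "mvr B (compr B M1 M2) v = mvr B M1 (mvr B M2 v)"
proof
  fix a
  show "mvr B (compr B M1 M2) v a = mvr B M1 (mvr B M2 v) a"
  proof (cases "a \<in> B")
    case True
    have "(\<Sum>b\<in>B. (\<Sum>c\<in>B. M1 a c * M2 c b) * v b) = (\<Sum>b\<in>B. \<Sum>c\<in>B. M1 a c * (M2 c b * v b))"
      by (simp add: sum_distrib_right mult.assoc)
    also have "\<dots> = (\<Sum>c\<in>B. \<Sum>b\<in>B. M1 a c * (M2 c b * v b))"
      by (rule sum.swap)
    also have "\<dots> = (\<Sum>c\<in>B. M1 a c * mvr B M2 v c)"
      by (rule sum.cong) (auto simp: mvr_def sum_distrib_left)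
    finally show ?thesis using True by (simp add: mvr_def compr_def)
  qed (simp add: mvr_def)
qed

lemma orthr_comp:
  assumes "finite B" "orthr B M1" "orthr B M2"
  shows "orthr B (compr B M1 M2)"
  unfolding orthr_def
proof (intro ballI)
  fix a b assume ab: "a \<in> B" "b \<in> B"
  have "(\<Sum>c\<in>B. compr B M1 M2 c a * compr B M1 M2 c b)
      = (\<Sum>c\<in>B. \<Sum>e\<in>B. \<Sum>f\<in>B. M2 e a * M2 f b * (M1 c e * M1 c f))"
    unfolding compr_def by (simp add: sum_product mult_ac)
  also have "\<dots> = (\<Sum>e\<in>B. \<Sum>c\<in>B. \<Sum>f\<in>B. M2 e a * M2 f b * (M1 c e * M1 c f))"
    by (rule sum.swap)
  also have "\<dots> = (\<Sum>e\<in>B. \<Sum>f\<in>B. \<Sum>c\<in>B. M2 e a * M2 f b * (M1 c e * M1 c f))"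
    by (rule sum.cong[OF refl], rule sum.swap)
  also have "\<dots> = (\<Sum>e\<in>B. \<Sum>f\<in>B. M2 e a * M2 f b * (if e = f then 1 else 0))"
    using assms(2) by (intro sum.cong refl) (simp add: orthr_def sum_distrib_left[symmetric])
  also have "\<dots> = (\<Sum>e\<in>B. M2 e a * M2 e b)"
    using assms(1) by (simp add: if_distrib cong: if_cong)
  also have "\<dots> = (if a = b then 1 else 0)"
    using assms(3) ab by (simp add: orthr_def)
  finally show "(\<Sum>c\<in>B. compr B M1 M2 c a * compr B M1 M2 c b) = (if a = b then 1 else 0)" .
qed

lemma orthr_ip:
  assumes "finite B" "orthr B M" "suppB B u" "suppB B v"
  shows "ipr B (mvr B M u) (mvr B M v) = ipr B u v"
proof -
  have "ipr B (mvr B M u) (mvr B M v) = (\<Sum>a\<in>B. \<Sum>b\<in>B. \<Sum>c\<in>B. u b * v c * (M a b * M a c))"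
    unfolding ipr_def mvr_def by (simp add: sum_product mult_ac)
  also have "\<dots> = (\<Sum>b\<in>B. \<Sum>a\<in>B. \<Sum>c\<in>B. u b * v c * (M a b * M a c))"
    by (rule sum.swap)
  also have "\<dots> = (\<Sum>b\<in>B. \<Sum>c\<in>B. \<Sum>a\<in>B. u b * v c * (M a b * M a c))"
    by (rule sum.cong[OF refl], rule sum.swap)
  also have "\<dots> = (\<Sum>b\<in>B. \<Sum>c\<in>B. u b * v c * (if b = c then 1 else 0))"
    using assms(2) by (intro sum.cong refl) (simp add: orthr_def sum_distrib_left[symmetric])
  also have "\<dots> = ipr B u v"
    using assms(1) by (simp add: if_distrib ipr_def cong: if_cong)
  finally show ?thesis .
qed

definition idm :: "'a \<Rightarrow> 'a \<Rightarrow> real" where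
  "idm a b = (if a = b then 1 else 0)"

lemma idm_mult: "idm a b * x = (if a = b then x else 0)" "x * idm a b = (if a = b then x else 0)"
  by (simp_all add: idm_def)

lemma orthr_idm: "finite B \<Longrightarrow> orthr B idm"
  unfolding orthr_def by (simp add: idm_mult sum.delta, simp add: idm_def)

lemma idm_sym: "idm a b = idm b a" by (simp add: idm_def)

definition hh :: "'a set \<Rightarrow> ('a \<Rightarrow> real) \<Rightarrow> 'a \<Rightarrow> 'a \<Rightarrow> real" where
  "hh B w = (\<lambda>a b. idm a b - 2 * w a * w b / ipr B w w)"

lemma orthr_hh:
  assumes "finite B" and s: "ipr B w w \<noteq> 0"
  shows "orthr B (hh B w)"
  unfolding orthr_def
proof (intro ballI)
  fix a b assume ab: "a \<in> B" "b \<in> B"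
  define s where "s = ipr B w w"
  have s0: "s \<noteq> 0" using s s_def by simp
  have eq: "hh B w c a * hh B w c b = idm c a * idm c b - (2/s) * w b * (idm c a * w c)
            - (2/s) * w a * (idm c b * w c) + (4/s^2) * (w a * w b) * (w c * w c)" for c
    unfolding hh_def s_def[symmetric] using s0
    by (simp add: field_simps power2_eq_square)
  have "(\<Sum>c\<in>B. hh B w c a * hh B w c b) =
        (\<Sum>c\<in>B. idm c a * idm c b) - (2/s) * w b * (\<Sum>c\<in>B. idm c a * w c)
        - (2/s) * w a * (\<Sum>c\<in>B. idm c b * w c) + (4/s^2) * (w a * w b) * (\<Sum>c\<in>B. w c * w c)"
    unfolding eq by (simp add: sum_subtractf sum.distrib sum_distrib_left)
  also have "\<dots> = idm a b - (2/s) * w b * w a - (2/s) * w a * w b + (4/s^2) * (w a * w b) * s"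
  proof -
    have ss: "(\<Sum>c\<in>B. w c * w c) = s" by (simp add: s_def ipr_def)
    show ?thesis using ab assms(1) by (simp add: idm_mult sum.delta ss idm_sym[of b a])
  qed
  also have "\<dots> = idm a b" using s0 by (simp add: field_simps power2_eq_square)
  finally show "(\<Sum>c\<in>B. hh B w c a * hh B w c b) = (if a = b then 1 else 0)"
    by (simp add: idm_def)
qed

lemma mvr_hh:
  assumes "finite B" "suppB B w" "suppB B v"
  shows "mvr B (hh B w) v = (\<lambda>a. v a - 2 * ipr B w v / ipr B w w * w a)"
proof
  fix a
  show "mvr B (hh B w) v a = v a - 2 * ipr B w v / ipr B w w * w a"
  proof (cases "a \<in> B")
    case True
    have pt: "hh B w a b * v b = idm a b * v b - (2 * w a / ipr B w w) * (w b * v b)" for b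
      unfolding hh_def by (simp add: divide_inverse algebra_simps)
    have "(\<Sum>b\<in>B. hh B w a b * v b) = (\<Sum>b\<in>B. idm a b * v b) - (2 * w a / ipr B w w) * (\<Sum>b\<in>B. w b * v b)"
      unfolding pt by (simp add: sum_subtractf sum_distrib_left)
    also have "\<dots> = v a - 2 * ipr B w v / ipr B w w * w a"
      using True assms(1) by (simp add: idm_mult sum.delta ipr_def)
    finally show ?thesis using True by (simp add: mvr_def)
  next
    case False thus ?thesis using assms by (simp add: mvr_def suppB_def)
  qed
qed

lemma ipr_diff_left: "ipr B (\<lambda>a. x a - y a) z = ipr B x z - ipr B y z"
  unfolding ipr_def by (simp add: left_diff_distrib sum_subtractf)

lemma ipr_diff_right: "ipr B z (\<lambda>a. x a - y a) = ipr B z x - ipr B z y"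
  unfolding ipr_def by (simp add: right_diff_distrib sum_subtractf)

lemma ipr_pos:
  assumes "finite B" "suppB B w" "w \<noteq> (\<lambda>a. 0)"
  shows "ipr B w w > 0"
proof -
  obtain a where a: "w a \<noteq> 0" using assms(3) by auto
  hence aB: "a \<in> B" using assms(2) unfolding suppB_def by auto
  have "0 < (w a)^2" using a by simp
  hence "0 < w a * w a" by (simp add: power2_eq_square)
  also have "\<dots> \<le> ipr B w w" unfolding ipr_def
    using assms(1) aB by (intro member_le_sum) auto
  finally show ?thesis .
qed

lemma extend_orth:
  assumes fin: "finite B"
  shows "(\<forall>p\<in>set ps. suppB B (fst p) \<and> suppB B (snd p)) \<Longrightarrow>
         (\<forall>p\<in>set ps. \<forall>p'\<in>set ps. ipr B (fst p) (fst p') = ipr B (snd p) (snd p')) \<Longrightarrow>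
         \<exists>M. orthr B M \<and> (\<forall>p\<in>set ps. mvr B M (fst p) = snd p)"
proof (induction ps)
  case Nil
  show ?case using orthr_idm[OF fin] by auto
next
  case (Cons p rest)
  obtain u v where p: "p = (u, v)" by force
  from Cons.prems have su: "suppB B u" and sv: "suppB B v" using p by auto
  from Cons.IH Cons.prems obtain M where M: "orthr B M" "\<forall>p\<in>set rest. mvr B M (fst p) = snd p"
    by auto
  define y where "y = mvr B M u"
  have sy: "suppB B y" unfolding y_def by (rule suppB_mvr)
  have yy: "ipr B y y = ipr B v v"
    using orthr_ip[OF fin M(1) su su] Cons.prems(2) p by (simp add: y_def)
  have yv': "ipr B y (snd q) = ipr B v (snd q)" if q: "q \<in> set rest" for q
  proof -
    have sq: "suppB B (fst q)" using Cons.prems(1) q by auto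
    have "ipr B y (snd q) = ipr B (mvr B M u) (mvr B M (fst q))" using M(2) q by (simp add: y_def)
    also have "\<dots> = ipr B u (fst q)" by (rule orthr_ip[OF fin M(1) su sq])
    also have "\<dots> = ipr B v (snd q)" using Cons.prems(2) q p by auto
    finally show ?thesis .
  qed
  show ?case
  proof (cases "y = v")
    case True
    thus ?thesis using M p by (auto simp: y_def)
  next
    case False
    define w where "w = (\<lambda>a. y a - v a)"
    have sw: "suppB B w" using sy sv unfolding w_def suppB_def by auto
    have wne: "w \<noteq> (\<lambda>a. 0)"
    proof
      assume h: "w = (\<lambda>a. 0)"
      have "y = v"
      proof
        fix a
        have "w a = 0" using h by simp
        thus "y a = v a" unfolding w_def by simp
      qed
      thus False using False by simp
    qed
    have spos: "ipr B w w > 0" by (rule ipr_pos[OF fin sw wne])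
    have vy: "ipr B v y = ipr B y v" by (rule ipr_comm)
    have ww: "ipr B w w = 2 * (ipr B v v - ipr B y v)"
    proof -
      have "ipr B w w = ipr B y w - ipr B v w" unfolding w_def by (rule ipr_diff_left)
      also have "ipr B y w = ipr B y y - ipr B y v"
        unfolding w_def by (rule ipr_diff_right)
      also have "ipr B v w = ipr B v y - ipr B v v"
        unfolding w_def by (rule ipr_diff_right)
      finally show ?thesis using yy vy by simp
    qed
    have wy: "ipr B w y = ipr B v v - ipr B y v"
      unfolding w_def ipr_diff_left using yy vy by simp
    have Hy: "mvr B (hh B w) y = v"
    proof -
      have "mvr B (hh B w) y = (\<lambda>a. y a - 2 * ipr B w y / ipr B w w * w a)"
        by (rule mvr_hh[OF fin sw sy])
      also have "2 * ipr B w y / ipr B w w = 1" using ww wy spos by simp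
      finally show ?thesis unfolding w_def by simp
    qed
    have Hv': "mvr B (hh B w) (snd q) = snd q" if q: "q \<in> set rest" for q
    proof -
      have sq: "suppB B (snd q)" using Cons.prems(1) q by auto
      have "ipr B w (snd q) = 0" unfolding w_def ipr_diff_left using yv'[OF q] by simp
      thus ?thesis using mvr_hh[OF fin sw sq] by simp
    qed
    have o: "orthr B (compr B (hh B w) M)"
      by (rule orthr_comp[OF fin orthr_hh[OF fin] M(1)]) (use spos in simp)
    show ?thesis
    proof (intro exI conjI ballI)
      show "orthr B (compr B (hh B w) M)" by (rule o)
      fix q assume "q \<in> set (p # rest)"
      then consider "q = p" | "q \<in> set rest" by auto
      thus "mvr B (compr B (hh B w) M) (fst q) = snd q"
      proof cases
        case 1 thus ?thesis using Hy p by (simp add: mvr_comp[OF fin] y_def)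
      next
        case 2 thus ?thesis using Hv' M(2) by (simp add: mvr_comp[OF fin])
      qed
    qed
  qed
qed

lemma sum_rot:
  assumes "0 < (n::nat)"
  shows "(\<Sum>J<n. g ((J + m) mod n)) = (\<Sum>e<n. (g e :: real))"
proof (rule sum.reindex_bij_witness[where i = "\<lambda>e. (e + (n - m mod n)) mod n" and j = "\<lambda>J. (J + m) mod n"])
  fix a assume a: "a \<in> {..<n}"
  have "((a + m) mod n + (n - m mod n)) mod n = (a + m + (n - m mod n)) mod n"
    by (simp add: mod_add_left_eq)
  also have "a + m + (n - m mod n) = a + n + (m div n) * n"
    using mod_less_divisor[OF assms, of m] div_mult_mod_eq[of m n] by linarith
  also have "(a + n + (m div n) * n) mod n = a" using a by simp
  finally show "((a + m) mod n + (n - m mod n)) mod n = a" .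
next
  fix b assume b: "b \<in> {..<n}"
  have "((b + (n - m mod n)) mod n + m) mod n = (b + (n - m mod n) + m) mod n"
    by (simp add: mod_add_left_eq)
  also have "b + (n - m mod n) + m = b + n + (m div n) * n"
    using mod_less_divisor[OF assms, of m] div_mult_mod_eq[of m n] by linarith
  also have "(b + n + (m div n) * n) mod n = b" using b by simp
  finally show "((b + (n - m mod n)) mod n + m) mod n = b" .
qed (use assms in auto)

definition rot :: "nat \<Rightarrow> nat \<Rightarrow> nat \<Rightarrow> nat" where
  "rot n b J = (J + n - b) mod n"
definition sgb :: "nat \<Rightarrow> nat \<Rightarrow> real" where
  "sgb b J = (if b \<le> J then -1 else 1)"
definition cyc :: "nat \<Rightarrow> (nat \<Rightarrow> real) \<Rightarrow> nat \<Rightarrow> real" where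
  "cyc n x d = (\<Sum>e<n. x e * x ((e + d) mod n))"
definition neg :: "nat \<Rightarrow> (nat \<Rightarrow> real) \<Rightarrow> nat \<Rightarrow> real" where
  "neg n x d = (\<Sum>e<n. (if e + d < n then 1 else -1) * x e * x ((e + d) mod n))"

lemma rot_pt:
  assumes "b \<le> c" "c < n" "J < n"
  shows "rot n b J = (rot n c J + (c - b)) mod n"
    and "sgb b J * sgb c J = (if rot n c J + (c - b) < n then 1 else -1)"
proof -
  have "(J + n - b) = (J + n - c) + (c - b)" using assms by simp
  thus "rot n b J = (rot n c J + (c - b)) mod n" unfolding rot_def by (simp add: mod_add_left_eq)
  show "sgb b J * sgb c J = (if rot n c J + (c - b) < n then 1 else -1)"
  proof (cases "c \<le> J")
    case True
    hence "rot n c J = J - c" unfolding rot_def using assms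
      by (metis add.commute diff_add_assoc le_add_diff_inverse2 le_add2 mod_add_self1 less_imp_diff_less mod_less)
    thus ?thesis using True assms by (simp add: sgb_def)
  next
    case False
    hence r: "rot n c J = J + n - c" unfolding rot_def using assms by simp
    show ?thesis
    proof (cases "b \<le> J")
      case True thus ?thesis using False r assms by (simp add: sgb_def)
    next
      case False2: False thus ?thesis using False r assms by (simp add: sgb_def)
    qed
  qed
qed

lemma rot_c: "c < n \<Longrightarrow> rot n c J = (J + (n - c)) mod n"
  unfolding rot_def by simp

lemma gram_per:
  assumes "b \<le> c" "c < n"
  shows "(\<Sum>J<n. x (rot n b J) * x (rot n c J)) = cyc n x (c - b)"
proof -
  have "(\<Sum>J<n. x (rot n b J) * x (rot n c J)) = (\<Sum>J<n. (\<lambda>e. x e * x ((e + (c - b)) mod n)) (rot n c J))"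
    by (rule sum.cong) (auto simp: rot_pt(1)[OF assms] mult.commute)
  also have "\<dots> = cyc n x (c - b)" unfolding rot_c[OF assms(2)] cyc_def
    by (rule sum_rot) (use assms in simp)
  finally show ?thesis .
qed

lemma gram_per_sgn:
  assumes "b \<le> c" "c < n"
  shows "(\<Sum>J<n. sgb b J * sgb c J * (x (rot n b J) * x (rot n c J))) = neg n x (c - b)"
proof -
  have "(\<Sum>J<n. sgb b J * sgb c J * (x (rot n b J) * x (rot n c J))) =
        (\<Sum>J<n. (\<lambda>e. (if e + (c - b) < n then 1 else -1) * x e * x ((e + (c - b)) mod n)) (rot n c J))"
    by (rule sum.cong) (auto simp: rot_pt[OF assms] mult.commute)
  also have "\<dots> = neg n x (c - b)" unfolding rot_c[OF assms(2)] neg_def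
    by (rule sum_rot) (use assms in simp)
  finally show ?thesis .
qed

definition lin :: "nat \<Rightarrow> (nat \<Rightarrow> real) \<Rightarrow> nat \<Rightarrow> real" where
  "lin n x d = (\<Sum>e<n-d. x e * x (e + d))"

lemma split_wrap:
  fixes n d :: nat and g :: "nat \<Rightarrow> real"
  assumes "d \<le> n"
  shows "(\<Sum>e<n. g e) = (\<Sum>e<n-d. g e) + (\<Sum>e<d. g (e + (n - d)))"
proof -
  have "(\<Sum>e<n. g e) = (\<Sum>e\<in>{0..<n-d}. g e) + (\<Sum>e\<in>{n-d..<n}. g e)"
    using assms by (simp add: lessThan_atLeast0 sum.atLeastLessThan_concat)
  also have "(\<Sum>e\<in>{n-d..<n}. g e) = (\<Sum>e\<in>{0+(n-d)..<d+(n-d)}. g e)" using assms by simp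
  also have "\<dots> = (\<Sum>e\<in>{0..<d}. g (e + (n - d)))" by (rule sum.shift_bounds_nat_ivl)
  finally show ?thesis by (simp add: lessThan_atLeast0)
qed

lemma cyc_lin:
  assumes "0 < d" "d < n"
  shows "cyc n x d = lin n x d + lin n x (n - d)" and "neg n x d = lin n x d - lin n x (n - d)"
proof -
  have A: "(\<Sum>e<n-d. x e * x ((e + d) mod n)) = lin n x d"
    unfolding lin_def by (rule sum.cong) auto
  have A': "(\<Sum>e<n-d. (if e + d < n then 1 else -1) * x e * x ((e + d) mod n)) = lin n x d"
    unfolding lin_def by (rule sum.cong) auto
  have B: "(\<Sum>e<d. x (e + (n - d)) * x ((e + (n - d) + d) mod n)) = lin n x (n - d)"
    unfolding lin_def using assms by (intro sum.cong) (auto simp: mult.commute)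
  have B': "(\<Sum>e<d. (if e + (n - d) + d < n then 1 else -1) * x (e + (n - d)) * x ((e + (n - d) + d) mod n)) = - lin n x (n - d)"
    unfolding lin_def using assms by (simp add: sum_negf[symmetric] mult.commute)
  show "cyc n x d = lin n x d + lin n x (n - d)"
    unfolding cyc_def split_wrap[OF less_imp_le[OF assms(2)]] A B ..
  show "neg n x d = lin n x d - lin n x (n - d)"
    unfolding neg_def split_wrap[OF less_imp_le[OF assms(2)]] A' B' by simp
qed

lemma cyc_lin0: "0 < n \<Longrightarrow> cyc n x 0 = lin n x 0" "0 < n \<Longrightarrow> neg n x 0 = lin n x 0"
  unfolding cyc_def neg_def lin_def by simp_all

lemma lin_two:
  assumes "0 < k" "k < n" "d < n"
  shows "lin n (\<lambda>e. if e = 0 then p else if e = k then q else 0) d =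
         (if d = 0 then p * p + q * q else if d = k then p * q else 0)"
proof -
  let ?t = "\<lambda>e. if e = 0 then p else if e = k then q else (0::real)"
  have pt: "?t e * ?t (e + d) = (if e = 0 then p * ?t d else 0) + (if e = k then q * ?t (k + d) else 0)" for e
    using assms(1) by auto
  have "lin n ?t d = (if 0 < n - d then p * ?t d else 0) + (if k < n - d then q * ?t (k + d) else 0)"
    unfolding lin_def pt by (simp add: sum.distrib sum.delta)
  also have "\<dots> = (if d = 0 then p * p + q * q else if d = k then p * q else 0)"
    using assms by auto
  finally show ?thesis .
qed

lemma lin_one:
  assumes "d < n"
  shows "lin n (\<lambda>e. if e = 0 then w else 0) d = (if d = 0 then w * w else 0)"
proof -
  have pt: "(if e = 0 then w else 0) * (if e + d = 0 then w else 0) = (if e = 0 then (if d = 0 then w * w else 0) else (0::real))" for e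
    by auto
  show ?thesis unfolding lin_def pt using assms by (simp add: sum.delta)
qed

definition seqS :: "(nat \<Rightarrow> real) \<Rightarrow> (nat \<Rightarrow> real) \<Rightarrow> (nat \<Rightarrow> real) \<Rightarrow> (nat \<Rightarrow> real) \<Rightarrow> nat \<Rightarrow> nat \<Rightarrow> real" where
  "seqS hs ps qs ws e k = (if k = 0 then hs e else if k < 27 then (if e = 0 then ps k else if e = k then qs k else 0)
      else if k < 31 then (if e = 0 then ws (k - 27) else 0) else 0)"

definition linV :: "(nat \<Rightarrow> nat \<Rightarrow> real) \<Rightarrow> nat \<Rightarrow> real" where
  "linV a d = (\<Sum>k<31. lin 27 (\<lambda>e. a e k) d)"
definition cycV :: "(nat \<Rightarrow> nat \<Rightarrow> real) \<Rightarrow> nat \<Rightarrow> real" where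
  "cycV a d = (\<Sum>k<31. cyc 27 (\<lambda>e. a e k) d)"
definition negV :: "(nat \<Rightarrow> nat \<Rightarrow> real) \<Rightarrow> nat \<Rightarrow> real" where
  "negV a d = (\<Sum>k<31. neg 27 (\<lambda>e. a e k) d)"

lemma cycV_lin: "0 < d \<Longrightarrow> d < 27 \<Longrightarrow> cycV a d = linV a d + linV a (27 - d)"
  unfolding cycV_def linV_def by (simp add: cyc_lin sum.distrib)
lemma negV_lin: "0 < d \<Longrightarrow> d < 27 \<Longrightarrow> negV a d = linV a d - linV a (27 - d)"
  unfolding negV_def linV_def by (simp add: cyc_lin sum_subtractf)
lemma cycV_lin0: "cycV a 0 = linV a 0" "negV a 0 = linV a 0"
  unfolding cycV_def negV_def linV_def by (simp_all add: cyc_lin0)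

lemma linV_seqS:
  assumes "d < 27"
  shows "linV (seqS hs ps qs ws) d = lin 27 hs d + (if d = 0 then (\<Sum>k<26. ps (Suc k) * ps (Suc k) + qs (Suc k) * qs (Suc k)) + (\<Sum>j<4. ws j * ws j) else ps d * qs d)"
proof -
  let ?f = "\<lambda>k. lin 27 (\<lambda>e. seqS hs ps qs ws e k) d"
  have s1: "(\<Sum>k<31. ?f k) = ?f 0 + (\<Sum>k<26. ?f (Suc k)) + (\<Sum>j<4. ?f (j+27))"
  proof -
    have "(\<Sum>k<31. ?f k) = (\<Sum>k<27. ?f k) + (\<Sum>j<4. ?f (j + (31 - 4)))"
      using split_wrap[of 4 31 ?f] by simp
    also have "(\<Sum>k<27. ?f k) = ?f 0 + (\<Sum>k<26. ?f (Suc k))"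
      by (subst sum.lessThan_Suc_shift[of _ 26, simplified]) simp
    finally show ?thesis by simp
  qed
  have c0: "?f 0 = lin 27 hs d" by (simp add: seqS_def)
  have c1: "?f (Suc k) = (if d = 0 then ps (Suc k) * ps (Suc k) + qs (Suc k) * qs (Suc k) else if d = Suc k then ps (Suc k) * qs (Suc k) else 0)"
    if "k < 26" for k
  proof -
    have "(\<lambda>e. seqS hs ps qs ws e (Suc k)) = (\<lambda>e. if e = 0 then ps (Suc k) else if e = Suc k then qs (Suc k) else 0)"
      using that by (simp add: seqS_def)
    thus ?thesis using lin_two[of "Suc k" 27 d] that assms by simp
  qed
  have c2: "?f (j+27) = (if d = 0 then ws j * ws j else 0)" if "j < 4" for j
  proof -
    have jj: "j + 27 - 27 = j" by simp
    have "(\<lambda>e. seqS hs ps qs ws e (j+27)) = (\<lambda>e. if e = 0 then ws j else 0)"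
      using that unfolding seqS_def jj by simp
    thus ?thesis using lin_one[of d 27 "ws j"] assms by simp
  qed
  have s2: "(\<Sum>k<26. ?f (Suc k)) = (if d = 0 then (\<Sum>k<26. ps (Suc k) * ps (Suc k) + qs (Suc k) * qs (Suc k)) else ps d * qs d)"
  proof (cases "d = 0")
    case True thus ?thesis using c1 by simp
  next
    case False
    hence "(\<Sum>k<26. ?f (Suc k)) = (\<Sum>k<26. if k = d - 1 then ps d * qs d else 0)"
      using c1 by (intro sum.cong) auto
    also have "\<dots> = ps d * qs d"
    proof -
      have dd: "d - 1 < 26" using assms by linarith
      show ?thesis using dd by (simp add: sum.delta')
    qed
    finally show ?thesis using False by simp
  qed
  have s3: "(\<Sum>j<4. ?f (j+27)) = (if d = 0 then (\<Sum>j<4. ws j * ws j) else 0)"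
    using c2 by simp
  show ?thesis unfolding linV_def s1 c0 s2 s3 by simp
qed

definition h1 :: "nat \<Rightarrow> real" where
  "h1 e = [520, 402, 253, 147, 169, 169, 119, 87, 61, 71, 75, 2, 7, -3, -12, -12, -76, -62, -61, -82, -120, -170, -153, -147, -256, -365, -339] ! e / 1024"

definition p1 :: "nat \<Rightarrow> real" where
  "p1 k = [0, 1/64, 1/128, 1/64, 1/64, 1/64, 1/64, 1/64, 1/64, 1/64, 1/256, 1/64, 1/64, 1/128, 1/128, 1/64, 1/64, 1/64, 1/64, 1/128, 1/256, 1/512, 1/256, 1/64, 1/64, 1/128, 1/64] ! k"

definition q1 :: "nat \<Rightarrow> real" where
  "q1 k = [0, -179029/11059200, -56063/5529600, -34583/1843200, -226579/11059200, -88459/5529600, -229/11520, -128329/11059200, -189179/11059200, -2029/122880, -21061/2764800, 100987/11059200, 66173/3686400, -27193/5529600, -7667/1382400, 13/900, 165287/11059200, 98807/5529600, 53/3840, -5813/691200, 4549/691200, 229/92160, -7/2700, -76777/5529600, -49391/3686400, 16381/2764800, 13337/1382400] ! k"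

definition w1 :: "nat \<Rightarrow> real" where
  "w1 j = [92358623/1244160000, 3133/622080000, 59/207360000, 59/622080000] ! j"

definition h2 :: "nat \<Rightarrow> real" where
  "h2 e = [848, 198, 34, -93, -56, -40, -91, -119, -128, -92, -72, -133, -100, -89, -72, -51, -104, -57, -20, -21, -36, -48, 27, 88, 21, 57, 365] ! e / 1024"

definition p2 :: "nat \<Rightarrow> real" where
  "p2 k = [0, 1/64, 1/64, 1/64, 1/4096, 1/64, 1/64, 1/64, 1/64, 1/64, 1/256, 1/64, 1/128, 1/128, 1/64, 1/64, 1/64, 1/64, 1/64, 1/64, 1/128, 1/64, 1/64, 1/64, 1/64, 1/256, 1/64] ! k"

definition q2 :: "nat \<Rightarrow> real" where
  "q2 k = [0, 6123/409600, 2753/204800, 6701/409600, -1/3200, -6359/409600, -627/40960, -2513/102400, -4051/204800, 173/10240, 557/102400, 3703/204800, -1203/204800, -2159/204800, 3033/204800, 509/51200, -1847/204800, -4443/409600, -399/20480, -10427/409600, 2073/204800, -1589/81920, 10891/409600, 10273/409600, 343/12800, -247/51200, -297/25600] ! k"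

definition w2 :: "nat \<Rightarrow> real" where
  "w2 j = [55751/1024000, 99/1024000, 1/128000, 3/1024000] ! j"

definition K2 :: "nat \<Rightarrow> real" where
  "K2 d = [1, 59/100, 23/100, 2/25, 9/100, 3/100, -1/10, -4/25, -4/25, -3/20, -19/100, -27/100, -6/25, -11/50, -11/50, -6/25, -27/100, -19/100, -3/20, -4/25, -4/25, -1/10, 3/100, 9/100, 2/25, 23/100, 59/100] ! d"

lemma less27_cases: "(d::nat) < 27 \<Longrightarrow> d = 0 \<or> d = 1 \<or> d = 2 \<or> d = 3 \<or> d = 4 \<or> d = 5 \<or> d = 6 \<or> d = 7 \<or> d = 8 \<or> d = 9 \<or> d = 10 \<or> d = 11 \<or> d = 12 \<or> d = 13 \<or> d = 14 \<or> d = 15 \<or> d = 16 \<or> d = 17 \<or> d = 18 \<or> d = 19 \<or> d = 20 \<or> d = 21 \<or> d = 22 \<or> d = 23 \<or> d = 24 \<or> d = 25 \<or> d = 26"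
  by presburger

lemma lin_h1_0: "lin 27 h1 0 = 258319/262144"
  by (simp add: lin_def h1_def lessThan_Suc numeral_eq_Suc)

lemma lin_h1_1: "lin 27 h1 1 = 795047/1048576"
  by (simp add: lin_def h1_def lessThan_Suc numeral_eq_Suc)

lemma lin_h1_2: "lin 27 h1 2 = 567285/1048576"
  by (simp add: lin_def h1_def lessThan_Suc numeral_eq_Suc)

lemma lin_h1_3: "lin 27 h1 3 = 225015/524288"
  by (simp add: lin_def h1_def lessThan_Suc numeral_eq_Suc)

lemma lin_h1_4: "lin 27 h1 4 = 416465/1048576"
  by (simp add: lin_def h1_def lessThan_Suc numeral_eq_Suc)

lemma lin_h1_5: "lin 27 h1 5 = 173049/524288"
  by (simp add: lin_def h1_def lessThan_Suc numeral_eq_Suc)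

lemma lin_h1_6: "lin 27 h1 6 = 3737/16384"
  by (simp add: lin_def h1_def lessThan_Suc numeral_eq_Suc)

lemma lin_h1_7: "lin 27 h1 7 = 168739/1048576"
  by (simp add: lin_def h1_def lessThan_Suc numeral_eq_Suc)

lemma lin_h1_8: "lin 27 h1 8 = 129993/1048576"
  by (simp add: lin_def h1_def lessThan_Suc numeral_eq_Suc)

lemma lin_h1_9: "lin 27 h1 9 = 48195/524288"
  by (simp add: lin_def h1_def lessThan_Suc numeral_eq_Suc)

lemma lin_h1_10: "lin 27 h1 10 = 36343/1048576"
  by (simp add: lin_def h1_def lessThan_Suc numeral_eq_Suc)

lemma lin_h1_11: "lin 27 h1 11 = -44617/1048576"
  by (simp add: lin_def h1_def lessThan_Suc numeral_eq_Suc)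

lemma lin_h1_12: "lin 27 h1 12 = -67869/1048576"
  by (simp add: lin_def h1_def lessThan_Suc numeral_eq_Suc)

lemma lin_h1_13: "lin 27 h1 13 = -95885/1048576"
  by (simp add: lin_def h1_def lessThan_Suc numeral_eq_Suc)

lemma lin_h1_14: "lin 27 h1 14 = -33679/262144"
  by (simp add: lin_def h1_def lessThan_Suc numeral_eq_Suc)

lemma lin_h1_15: "lin 27 h1 15 = -45/256"
  by (simp add: lin_def h1_def lessThan_Suc numeral_eq_Suc)

lemma lin_h1_16: "lin 27 h1 16 = -238893/1048576"
  by (simp add: lin_def h1_def lessThan_Suc numeral_eq_Suc)

lemma lin_h1_17: "lin 27 h1 17 = -117917/524288"
  by (simp add: lin_def h1_def lessThan_Suc numeral_eq_Suc)

lemma lin_h1_18: "lin 27 h1 18 = -3963/16384"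
  by (simp add: lin_def h1_def lessThan_Suc numeral_eq_Suc)

lemma lin_h1_19: "lin 27 h1 19 = -37177/131072"
  by (simp add: lin_def h1_def lessThan_Suc numeral_eq_Suc)

lemma lin_h1_20: "lin 27 h1 20 = -84087/262144"
  by (simp add: lin_def h1_def lessThan_Suc numeral_eq_Suc)

lemma lin_h1_21: "lin 27 h1 21 = -343705/1048576"
  by (simp add: lin_def h1_def lessThan_Suc numeral_eq_Suc)

lemma lin_h1_22: "lin 27 h1 22 = -307/1024"
  by (simp add: lin_def h1_def lessThan_Suc numeral_eq_Suc)

lemma lin_h1_23: "lin 27 h1 23 = -160765/524288"
  by (simp add: lin_def h1_def lessThan_Suc numeral_eq_Suc)

lemma lin_h1_24: "lin 27 h1 24 = -365617/1048576"
  by (simp add: lin_def h1_def lessThan_Suc numeral_eq_Suc)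

lemma lin_h1_25: "lin 27 h1 25 = -163039/524288"
  by (simp add: lin_def h1_def lessThan_Suc numeral_eq_Suc)

lemma lin_h1_26: "lin 27 h1 26 = -22035/131072"
  by (simp add: lin_def h1_def lessThan_Suc numeral_eq_Suc)

lemma lin_h2_0: "lin 27 h2 0 = 258153/262144"
  by (simp add: lin_def h2_def lessThan_Suc numeral_eq_Suc)

lemma lin_h2_1: "lin 27 h2 1 = 309085/1048576"
  by (simp add: lin_def h2_def lessThan_Suc numeral_eq_Suc)

lemma lin_h2_2: "lin 27 h2 2 = 60183/524288"
  by (simp add: lin_def h2_def lessThan_Suc numeral_eq_Suc)

lemma lin_h2_3: "lin 27 h2 3 = 41675/1048576"
  by (simp add: lin_def h2_def lessThan_Suc numeral_eq_Suc)

lemma lin_h2_4: "lin 27 h2 4 = 23593/524288"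
  by (simp add: lin_def h2_def lessThan_Suc numeral_eq_Suc)

lemma lin_h2_5: "lin 27 h2 5 = 15983/1048576"
  by (simp add: lin_def h2_def lessThan_Suc numeral_eq_Suc)

lemma lin_h2_6: "lin 27 h2 6 = -26089/524288"
  by (simp add: lin_def h2_def lessThan_Suc numeral_eq_Suc)

lemma lin_h2_7: "lin 27 h2 7 = -20871/262144"
  by (simp add: lin_def h2_def lessThan_Suc numeral_eq_Suc)

lemma lin_h2_8: "lin 27 h2 8 = -41781/524288"
  by (simp add: lin_def h2_def lessThan_Suc numeral_eq_Suc)

lemma lin_h2_9: "lin 27 h2 9 = -9865/131072"
  by (simp add: lin_def h2_def lessThan_Suc numeral_eq_Suc)

lemma lin_h2_10: "lin 27 h2 10 = -99637/1048576"
  by (simp add: lin_def h2_def lessThan_Suc numeral_eq_Suc)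

lemma lin_h2_11: "lin 27 h2 11 = -70927/524288"
  by (simp add: lin_def h2_def lessThan_Suc numeral_eq_Suc)

lemma lin_h2_12: "lin 27 h2 12 = -125781/1048576"
  by (simp add: lin_def h2_def lessThan_Suc numeral_eq_Suc)

lemma lin_h2_13: "lin 27 h2 13 = -115257/1048576"
  by (simp add: lin_def h2_def lessThan_Suc numeral_eq_Suc)

lemma lin_h2_14: "lin 27 h2 14 = -57793/524288"
  by (simp add: lin_def h2_def lessThan_Suc numeral_eq_Suc)

lemma lin_h2_15: "lin 27 h2 15 = -15749/131072"
  by (simp add: lin_def h2_def lessThan_Suc numeral_eq_Suc)

lemma lin_h2_16: "lin 27 h2 16 = -70705/524288"
  by (simp add: lin_def h2_def lessThan_Suc numeral_eq_Suc)

lemma lin_h2_17: "lin 27 h2 17 = -99437/1048576"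
  by (simp add: lin_def h2_def lessThan_Suc numeral_eq_Suc)

lemma lin_h2_18: "lin 27 h2 18 = -19581/262144"
  by (simp add: lin_def h2_def lessThan_Suc numeral_eq_Suc)

lemma lin_h2_19: "lin 27 h2 19 = -83469/1048576"
  by (simp add: lin_def h2_def lessThan_Suc numeral_eq_Suc)

lemma lin_h2_20: "lin 27 h2 20 = -83969/1048576"
  by (simp add: lin_def h2_def lessThan_Suc numeral_eq_Suc)

lemma lin_h2_21: "lin 27 h2 21 = -52111/1048576"
  by (simp add: lin_def h2_def lessThan_Suc numeral_eq_Suc)

lemma lin_h2_22: "lin 27 h2 22 = 15293/1048576"
  by (simp add: lin_def h2_def lessThan_Suc numeral_eq_Suc)

lemma lin_h2_23: "lin 27 h2 23 = 46775/1048576"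
  by (simp add: lin_def h2_def lessThan_Suc numeral_eq_Suc)

lemma lin_h2_24: "lin 27 h2 24 = 1297/32768"
  by (simp add: lin_def h2_def lessThan_Suc numeral_eq_Suc)

lemma lin_h2_25: "lin 27 h2 25 = 60303/524288"
  by (simp add: lin_def h2_def lessThan_Suc numeral_eq_Suc)

lemma lin_h2_26: "lin 27 h2 26 = 19345/65536"
  by (simp add: lin_def h2_def lessThan_Suc numeral_eq_Suc)

definition a1 :: "nat \<Rightarrow> nat \<Rightarrow> real" where "a1 = seqS h1 p1 q1 w1"
definition a2 :: "nat \<Rightarrow> nat \<Rightarrow> real" where "a2 = seqS h2 p2 q2 w2"
definition K1 :: "nat \<Rightarrow> real" where "K1 d = 1 - 2 * real d / 27"

lemma lin_h1_1': "lin 27 h1 (Suc 0) = 795047/1048576" using lin_h1_1 by simp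
lemma lin_h2_1': "lin 27 h2 (Suc 0) = 309085/1048576" using lin_h2_1 by simp

lemma a1_0: "linV a1 0 = 1"
  by (simp add: linV_seqS a1_def lin_h1_0, simp add: p1_def q1_def w1_def lessThan_Suc numeral_eq_Suc)

lemma a2_0: "linV a2 0 = 1"
  by (simp add: linV_seqS a2_def lin_h2_0, simp add: p2_def q2_def w2_def lessThan_Suc numeral_eq_Suc)

lemma a1_1: "negV a1 1 = K1 1 \<and> cycV a1 1 = K2 1"
  by (simp add: negV_lin cycV_lin linV_seqS a1_def lin_h1_1 lin_h1_1' lin_h1_26 p1_def q1_def K1_def K2_def)

lemma a2_1: "cycV a2 1 = K2 1 \<and> negV a2 1 = 0"
  by (simp add: negV_lin cycV_lin linV_seqS a2_def lin_h2_1 lin_h2_1' lin_h2_26 p2_def q2_def K2_def)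

lemma a1_2: "negV a1 2 = K1 2 \<and> cycV a1 2 = K2 2"
  by (simp add: negV_lin cycV_lin linV_seqS a1_def lin_h1_2 lin_h1_25 p1_def q1_def K1_def K2_def)

lemma a2_2: "cycV a2 2 = K2 2 \<and> negV a2 2 = 0"
  by (simp add: negV_lin cycV_lin linV_seqS a2_def lin_h2_2 lin_h2_25 p2_def q2_def K2_def)

lemma a1_3: "negV a1 3 = K1 3 \<and> cycV a1 3 = K2 3"
  by (simp add: negV_lin cycV_lin linV_seqS a1_def lin_h1_3 lin_h1_24 p1_def q1_def K1_def K2_def)

lemma a2_3: "cycV a2 3 = K2 3 \<and> negV a2 3 = 0"
  by (simp add: negV_lin cycV_lin linV_seqS a2_def lin_h2_3 lin_h2_24 p2_def q2_def K2_def)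

lemma a1_4: "negV a1 4 = K1 4 \<and> cycV a1 4 = K2 4"
  by (simp add: negV_lin cycV_lin linV_seqS a1_def lin_h1_4 lin_h1_23 p1_def q1_def K1_def K2_def)

lemma a2_4: "cycV a2 4 = K2 4 \<and> negV a2 4 = 0"
  by (simp add: negV_lin cycV_lin linV_seqS a2_def lin_h2_4 lin_h2_23 p2_def q2_def K2_def)

lemma a1_5: "negV a1 5 = K1 5 \<and> cycV a1 5 = K2 5"
  by (simp add: negV_lin cycV_lin linV_seqS a1_def lin_h1_5 lin_h1_22 p1_def q1_def K1_def K2_def)

lemma a2_5: "cycV a2 5 = K2 5 \<and> negV a2 5 = 0"
  by (simp add: negV_lin cycV_lin linV_seqS a2_def lin_h2_5 lin_h2_22 p2_def q2_def K2_def)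

lemma a1_6: "negV a1 6 = K1 6 \<and> cycV a1 6 = K2 6"
  by (simp add: negV_lin cycV_lin linV_seqS a1_def lin_h1_6 lin_h1_21 p1_def q1_def K1_def K2_def)

lemma a2_6: "cycV a2 6 = K2 6 \<and> negV a2 6 = 0"
  by (simp add: negV_lin cycV_lin linV_seqS a2_def lin_h2_6 lin_h2_21 p2_def q2_def K2_def)

lemma a1_7: "negV a1 7 = K1 7 \<and> cycV a1 7 = K2 7"
  by (simp add: negV_lin cycV_lin linV_seqS a1_def lin_h1_7 lin_h1_20 p1_def q1_def K1_def K2_def)

lemma a2_7: "cycV a2 7 = K2 7 \<and> negV a2 7 = 0"
  by (simp add: negV_lin cycV_lin linV_seqS a2_def lin_h2_7 lin_h2_20 p2_def q2_def K2_def)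

lemma a1_8: "negV a1 8 = K1 8 \<and> cycV a1 8 = K2 8"
  by (simp add: negV_lin cycV_lin linV_seqS a1_def lin_h1_8 lin_h1_19 p1_def q1_def K1_def K2_def)

lemma a2_8: "cycV a2 8 = K2 8 \<and> negV a2 8 = 0"
  by (simp add: negV_lin cycV_lin linV_seqS a2_def lin_h2_8 lin_h2_19 p2_def q2_def K2_def)

lemma a1_9: "negV a1 9 = K1 9 \<and> cycV a1 9 = K2 9"
  by (simp add: negV_lin cycV_lin linV_seqS a1_def lin_h1_9 lin_h1_18 p1_def q1_def K1_def K2_def)

lemma a2_9: "cycV a2 9 = K2 9 \<and> negV a2 9 = 0"
  by (simp add: negV_lin cycV_lin linV_seqS a2_def lin_h2_9 lin_h2_18 p2_def q2_def K2_def)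

lemma a1_10: "negV a1 10 = K1 10 \<and> cycV a1 10 = K2 10"
  by (simp add: negV_lin cycV_lin linV_seqS a1_def lin_h1_10 lin_h1_17 p1_def q1_def K1_def K2_def)

lemma a2_10: "cycV a2 10 = K2 10 \<and> negV a2 10 = 0"
  by (simp add: negV_lin cycV_lin linV_seqS a2_def lin_h2_10 lin_h2_17 p2_def q2_def K2_def)

lemma a1_11: "negV a1 11 = K1 11 \<and> cycV a1 11 = K2 11"
  by (simp add: negV_lin cycV_lin linV_seqS a1_def lin_h1_11 lin_h1_16 p1_def q1_def K1_def K2_def)

lemma a2_11: "cycV a2 11 = K2 11 \<and> negV a2 11 = 0"
  by (simp add: negV_lin cycV_lin linV_seqS a2_def lin_h2_11 lin_h2_16 p2_def q2_def K2_def)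

lemma a1_12: "negV a1 12 = K1 12 \<and> cycV a1 12 = K2 12"
  by (simp add: negV_lin cycV_lin linV_seqS a1_def lin_h1_12 lin_h1_15 p1_def q1_def K1_def K2_def)

lemma a2_12: "cycV a2 12 = K2 12 \<and> negV a2 12 = 0"
  by (simp add: negV_lin cycV_lin linV_seqS a2_def lin_h2_12 lin_h2_15 p2_def q2_def K2_def)

lemma a1_13: "negV a1 13 = K1 13 \<and> cycV a1 13 = K2 13"
  by (simp add: negV_lin cycV_lin linV_seqS a1_def lin_h1_13 lin_h1_14 p1_def q1_def K1_def K2_def)

lemma a2_13: "cycV a2 13 = K2 13 \<and> negV a2 13 = 0"
  by (simp add: negV_lin cycV_lin linV_seqS a2_def lin_h2_13 lin_h2_14 p2_def q2_def K2_def)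

lemma a1_14: "negV a1 14 = K1 14 \<and> cycV a1 14 = K2 14"
  by (simp add: negV_lin cycV_lin linV_seqS a1_def lin_h1_14 lin_h1_13 p1_def q1_def K1_def K2_def)

lemma a2_14: "cycV a2 14 = K2 14 \<and> negV a2 14 = 0"
  by (simp add: negV_lin cycV_lin linV_seqS a2_def lin_h2_14 lin_h2_13 p2_def q2_def K2_def)

lemma a1_15: "negV a1 15 = K1 15 \<and> cycV a1 15 = K2 15"
  by (simp add: negV_lin cycV_lin linV_seqS a1_def lin_h1_15 lin_h1_12 p1_def q1_def K1_def K2_def)

lemma a2_15: "cycV a2 15 = K2 15 \<and> negV a2 15 = 0"
  by (simp add: negV_lin cycV_lin linV_seqS a2_def lin_h2_15 lin_h2_12 p2_def q2_def K2_def)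

lemma a1_16: "negV a1 16 = K1 16 \<and> cycV a1 16 = K2 16"
  by (simp add: negV_lin cycV_lin linV_seqS a1_def lin_h1_16 lin_h1_11 p1_def q1_def K1_def K2_def)

lemma a2_16: "cycV a2 16 = K2 16 \<and> negV a2 16 = 0"
  by (simp add: negV_lin cycV_lin linV_seqS a2_def lin_h2_16 lin_h2_11 p2_def q2_def K2_def)

lemma a1_17: "negV a1 17 = K1 17 \<and> cycV a1 17 = K2 17"
  by (simp add: negV_lin cycV_lin linV_seqS a1_def lin_h1_17 lin_h1_10 p1_def q1_def K1_def K2_def)

lemma a2_17: "cycV a2 17 = K2 17 \<and> negV a2 17 = 0"
  by (simp add: negV_lin cycV_lin linV_seqS a2_def lin_h2_17 lin_h2_10 p2_def q2_def K2_def)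

lemma a1_18: "negV a1 18 = K1 18 \<and> cycV a1 18 = K2 18"
  by (simp add: negV_lin cycV_lin linV_seqS a1_def lin_h1_18 lin_h1_9 p1_def q1_def K1_def K2_def)

lemma a2_18: "cycV a2 18 = K2 18 \<and> negV a2 18 = 0"
  by (simp add: negV_lin cycV_lin linV_seqS a2_def lin_h2_18 lin_h2_9 p2_def q2_def K2_def)

lemma a1_19: "negV a1 19 = K1 19 \<and> cycV a1 19 = K2 19"
  by (simp add: negV_lin cycV_lin linV_seqS a1_def lin_h1_19 lin_h1_8 p1_def q1_def K1_def K2_def)

lemma a2_19: "cycV a2 19 = K2 19 \<and> negV a2 19 = 0"
  by (simp add: negV_lin cycV_lin linV_seqS a2_def lin_h2_19 lin_h2_8 p2_def q2_def K2_def)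

lemma a1_20: "negV a1 20 = K1 20 \<and> cycV a1 20 = K2 20"
  by (simp add: negV_lin cycV_lin linV_seqS a1_def lin_h1_20 lin_h1_7 p1_def q1_def K1_def K2_def)

lemma a2_20: "cycV a2 20 = K2 20 \<and> negV a2 20 = 0"
  by (simp add: negV_lin cycV_lin linV_seqS a2_def lin_h2_20 lin_h2_7 p2_def q2_def K2_def)

lemma a1_21: "negV a1 21 = K1 21 \<and> cycV a1 21 = K2 21"
  by (simp add: negV_lin cycV_lin linV_seqS a1_def lin_h1_21 lin_h1_6 p1_def q1_def K1_def K2_def)

lemma a2_21: "cycV a2 21 = K2 21 \<and> negV a2 21 = 0"
  by (simp add: negV_lin cycV_lin linV_seqS a2_def lin_h2_21 lin_h2_6 p2_def q2_def K2_def)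

lemma a1_22: "negV a1 22 = K1 22 \<and> cycV a1 22 = K2 22"
  by (simp add: negV_lin cycV_lin linV_seqS a1_def lin_h1_22 lin_h1_5 p1_def q1_def K1_def K2_def)

lemma a2_22: "cycV a2 22 = K2 22 \<and> negV a2 22 = 0"
  by (simp add: negV_lin cycV_lin linV_seqS a2_def lin_h2_22 lin_h2_5 p2_def q2_def K2_def)

lemma a1_23: "negV a1 23 = K1 23 \<and> cycV a1 23 = K2 23"
  by (simp add: negV_lin cycV_lin linV_seqS a1_def lin_h1_23 lin_h1_4 p1_def q1_def K1_def K2_def)

lemma a2_23: "cycV a2 23 = K2 23 \<and> negV a2 23 = 0"
  by (simp add: negV_lin cycV_lin linV_seqS a2_def lin_h2_23 lin_h2_4 p2_def q2_def K2_def)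

lemma a1_24: "negV a1 24 = K1 24 \<and> cycV a1 24 = K2 24"
  by (simp add: negV_lin cycV_lin linV_seqS a1_def lin_h1_24 lin_h1_3 p1_def q1_def K1_def K2_def)

lemma a2_24: "cycV a2 24 = K2 24 \<and> negV a2 24 = 0"
  by (simp add: negV_lin cycV_lin linV_seqS a2_def lin_h2_24 lin_h2_3 p2_def q2_def K2_def)

lemma a1_25: "negV a1 25 = K1 25 \<and> cycV a1 25 = K2 25"
  by (simp add: negV_lin cycV_lin linV_seqS a1_def lin_h1_25 lin_h1_2 p1_def q1_def K1_def K2_def)

lemma a2_25: "cycV a2 25 = K2 25 \<and> negV a2 25 = 0"
  by (simp add: negV_lin cycV_lin linV_seqS a2_def lin_h2_25 lin_h2_2 p2_def q2_def K2_def)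

lemma a1_26: "negV a1 26 = K1 26 \<and> cycV a1 26 = K2 26"
  by (simp add: negV_lin cycV_lin linV_seqS a1_def lin_h1_26 lin_h1_1 lin_h1_1' p1_def q1_def K1_def K2_def)

lemma a2_26: "cycV a2 26 = K2 26 \<and> negV a2 26 = 0"
  by (simp add: negV_lin cycV_lin linV_seqS a2_def lin_h2_26 lin_h2_1 lin_h2_1' p2_def q2_def K2_def)

lemma a1_1': "negV a1 (Suc 0) = K1 (Suc 0) \<and> cycV a1 (Suc 0) = K2 (Suc 0)" using a1_1 by simp
lemma a2_1': "cycV a2 (Suc 0) = K2 (Suc 0) \<and> negV a2 (Suc 0) = 0" using a2_1 by simp

lemma a1_props: "d < 27 \<Longrightarrow> negV a1 d = K1 d \<and> cycV a1 d = K2 d"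
  apply (drule less27_cases)
  apply (elim disjE)
  apply (simp_all only: a1_1' a1_1 a1_2 a1_3 a1_4 a1_5 a1_6 a1_7 a1_8 a1_9 a1_10 a1_11 a1_12 a1_13 a1_14 a1_15 a1_16 a1_17 a1_18 a1_19 a1_20 a1_21 a1_22 a1_23 a1_24 a1_25 a1_26)
  apply (simp add: cycV_lin0 a1_0 K1_def K2_def)
  done

lemma a2_props: "d < 27 \<Longrightarrow> cycV a2 d = K2 d \<and> negV a2 d = (if d = 0 then 1 else 0)"
  apply (drule less27_cases)
  apply (elim disjE)
  apply (simp_all add: a2_1' a2_1 a2_2 a2_3 a2_4 a2_5 a2_6 a2_7 a2_8 a2_9 a2_10 a2_11 a2_12 a2_13 a2_14 a2_15 a2_16 a2_17 a2_18 a2_19 a2_20 a2_21 a2_22 a2_23 a2_24 a2_25 a2_26)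
  apply (simp add: cycV_lin0 a2_0 K2_def)
  done

definition vecL :: "'l set \<Rightarrow> ('l \<Rightarrow> 'a) \<Rightarrow> ('l \<Rightarrow> real) \<Rightarrow> 'a \<Rightarrow> real" where
  "vecL L lab c = (\<lambda>a. \<Sum>l\<in>L. if a = lab l then c l else 0)"

lemma vecL_at:
  assumes "finite L" "inj lab"
  shows "vecL L lab c (lab l) = (if l \<in> L then c l else 0)"
proof -
  have "vecL L lab c (lab l) = (\<Sum>l'\<in>L. if l = l' then c l' else 0)"
    unfolding vecL_def using injD[OF assms(2)] by (intro sum.cong) auto
  thus ?thesis using assms(1) by (simp add: sum.delta)
qed

lemma vecL_out: "a \<notin> lab ` L \<Longrightarrow> vecL L lab c a = 0"
  unfolding vecL_def by (auto intro!: sum.neutral)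

lemma suppB_vecL: "lab ` L \<subseteq> B \<Longrightarrow> suppB B (vecL L lab c)"
  unfolding suppB_def
proof (intro allI impI)
  fix a assume "lab ` L \<subseteq> B" "a \<notin> B"
  hence "a \<notin> lab ` L" by blast
  thus "vecL L lab c a = 0" by (rule vecL_out)
qed

lemma ipr_vecL:
  assumes "finite B" "finite L" "inj lab" "lab ` L \<subseteq> B"
  shows "ipr B (vecL L lab c) v = (\<Sum>l\<in>L. c l * v (lab l))"
proof -
  have "ipr B (vecL L lab c) v = (\<Sum>a\<in>lab ` L. vecL L lab c a * v a)"
    unfolding ipr_def using assms(1,4) vecL_out by (intro sum.mono_neutral_right) auto
  also have "\<dots> = (\<Sum>l\<in>L. vecL L lab c (lab l) * v (lab l))"
    using assms(3) by (subst sum.reindex) (auto intro: inj_on_subset)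
  also have "\<dots> = (\<Sum>l\<in>L. c l * v (lab l))"
    using vecL_at[OF assms(2,3)] by simp
  finally show ?thesis .
qed

lemma ipr_vecL2:
  assumes "finite B" "finite L" "finite L'" "inj lab" "lab ` L \<subseteq> B"
  shows "ipr B (vecL L lab c) (vecL L' lab c') = (\<Sum>l\<in>L. c l * (if l \<in> L' then c' l else 0))"
  unfolding ipr_vecL[OF assms(1,2,4,5)] vecL_at[OF assms(3,4)] ..

definition osg :: "nat \<Rightarrow> nat \<Rightarrow> nat \<times> nat \<Rightarrow> real" where
  "osg N f a = (if snd a < N \<and> f \<le> snd a then -1 else 1)"
definition orc :: "nat \<Rightarrow> nat \<Rightarrow> (nat \<times> nat \<Rightarrow> real) \<Rightarrow> nat \<times> nat \<Rightarrow> real" where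
  "orc N f v = (\<lambda>a. osg N f a * v a)"

lemma orc_vecL: "orc N f (vecL L lab c) = vecL L lab (\<lambda>l. osg N f (lab l) * c l)"
  unfolding orc_def vecL_def by (auto simp: sum_distrib_left intro!: sum.cong)

lemma suppB_orc: "suppB B v \<Longrightarrow> suppB B (orc N f v)"
  unfolding suppB_def orc_def by simp

definition a0 :: "nat \<Rightarrow> nat \<Rightarrow> real" where
  "a0 e k = (if k = 0 then 5/27 else if k < 3 then 1/27 else 0)"
definition aseq :: "nat \<Rightarrow> nat \<Rightarrow> nat \<Rightarrow> real" where
  "aseq s = (if s = 0 then a0 else if s = 1 then a1 else a2)"
definition emb :: "nat \<Rightarrow> nat \<Rightarrow> nat \<Rightarrow> nat \<Rightarrow> real" where
  "emb s b J k = (if s = 1 then - sgb b J else 1) * aseq s (rot 27 b J) k"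
definition Gpre :: "nat \<Rightarrow> nat \<Rightarrow> nat \<Rightarrow> real" where
  "Gpre s b c = (\<Sum>J<27. \<Sum>k<31. emb s b J k * emb s c J k)"
definition Gpost :: "nat \<Rightarrow> nat \<Rightarrow> nat \<Rightarrow> real" where
  "Gpost s b c = (\<Sum>J<27. \<Sum>k<31. (sgb b J * sgb c J) * (emb s b J k * emb s c J k))"

lemma sgb_sq: "sgb b J * sgb b J = 1" by (simp add: sgb_def)

lemma sum_gram_per:
  assumes "b \<le> c" "c < 27"
  shows "(\<Sum>k<31. \<Sum>J<27. a (rot 27 b J) k * a (rot 27 c J) k) = cycV a (c - b)"
  unfolding cycV_def
proof (rule sum.cong[OF refl])
  fix k
  show "(\<Sum>J<27. a (rot 27 b J) k * a (rot 27 c J) k) = cyc 27 (\<lambda>e. a e k) (c - b)"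
    using gram_per[OF assms, of "\<lambda>e. a e k"] by simp
qed

lemma sum_gram_per_sgb:
  assumes "b \<le> c" "c < 27"
  shows "(\<Sum>k<31. \<Sum>J<27. sgb b J * sgb c J * (a (rot 27 b J) k * a (rot 27 c J) k)) = negV a (c - b)"
  unfolding negV_def
proof (rule sum.cong[OF refl])
  fix k
  show "(\<Sum>J<27. sgb b J * sgb c J * (a (rot 27 b J) k * a (rot 27 c J) k)) = neg 27 (\<lambda>e. a e k) (c - b)"
    using gram_per_sgn[OF assms, of "\<lambda>e. a e k"] by simp
qed

lemma Gpre_le:
  assumes "b \<le> c" "c < 27"
  shows "Gpre s b c = (if s = 1 then negV (aseq s) (c - b) else cycV (aseq s) (c - b))"
proof (cases "s = 1")
  case True
  have "Gpre s b c = (\<Sum>k<31. \<Sum>J<27. sgb b J * sgb c J * (aseq s (rot 27 b J) k * aseq s (rot 27 c J) k))"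
    unfolding Gpre_def emb_def using True by (subst sum.swap) (auto intro!: sum.cong simp: mult_ac)
  thus ?thesis using True sum_gram_per_sgb[OF assms] by simp
next
  case False
  have "Gpre s b c = (\<Sum>k<31. \<Sum>J<27. aseq s (rot 27 b J) k * aseq s (rot 27 c J) k)"
    unfolding Gpre_def emb_def using False by (subst sum.swap) simp
  thus ?thesis using False sum_gram_per[OF assms] by simp
qed

lemma Gpost_le:
  assumes "b \<le> c" "c < 27"
  shows "Gpost s b c = (if s = 1 then cycV (aseq s) (c - b) else negV (aseq s) (c - b))"
proof (cases "s = 1")
  case True
  have e: "sgb b J * sgb c J * ((- sgb b J * x) * (- sgb c J * y)) = x * y" for J x y
    using sgb_sq[of b J] sgb_sq[of c J] by (simp add: algebra_simps)
  have "Gpost s b c = (\<Sum>k<31. \<Sum>J<27. aseq s (rot 27 b J) k * aseq s (rot 27 c J) k)"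
    unfolding Gpost_def emb_def using True by (subst sum.swap) (intro sum.cong refl, auto simp: sgb_def)
  thus ?thesis using True sum_gram_per[OF assms] by simp
next
  case False
  have "Gpost s b c = (\<Sum>k<31. \<Sum>J<27. sgb b J * sgb c J * (aseq s (rot 27 b J) k * aseq s (rot 27 c J) k))"
    unfolding Gpost_def emb_def using False by (subst sum.swap) simp
  thus ?thesis using False sum_gram_per_sgb[OF assms] by simp
qed

definition dst :: "nat \<Rightarrow> nat \<Rightarrow> nat" where
  "dst b c = (if b \<le> c then c - b else b - c)"

lemma Gpre_sym: "Gpre s b c = Gpre s c b"
  unfolding Gpre_def by (simp add: mult.commute)
lemma Gpost_sym: "Gpost s b c = Gpost s c b"
  unfolding Gpost_def by (simp add: mult.commute mult.left_commute)

lemma sum_sign_count: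
  assumes "d \<le> n"
  shows "(\<Sum>e<n. (if e + d < n then 1 else -1 :: real)) = real n - 2 * real d"
proof -
  have "(\<Sum>e<n. (if e + d < n then 1 else -1 :: real)) =
        (\<Sum>e<n-d. (if e + d < n then 1 else -1 :: real)) + (\<Sum>e<d. (if e + (n - d) + d < n then 1 else -1 :: real))"
    by (rule split_wrap[OF assms])
  also have "(\<Sum>e<n-d. (if e + d < n then 1 else -1 :: real)) = (\<Sum>e<n-d. (1::real))"
    by (intro sum.cong) auto
  also have "(\<Sum>e<n-d. (1::real)) = real (n - d)" by simp
  also have "(\<Sum>e<d. (if e + (n - d) + d < n then 1 else -1 :: real)) = - real d"
    using assms by simp
  finally show ?thesis using assms by simp
qed

lemma a0_const: "a0 e k = a0 0 k" by (simp add: a0_def)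

lemma cycV_a0: "cycV a0 d = 1"
proof -
  have "cyc 27 (\<lambda>e. a0 e k) d = 27 * (a0 0 k * a0 0 k)" for k
    unfolding cyc_def by (subst a0_const, subst (2) a0_const) simp
  hence "cycV a0 d = (\<Sum>k<31. 27 * (a0 0 k * a0 0 k))" unfolding cycV_def by simp
  also have "\<dots> = 1" by (simp add: a0_def lessThan_Suc numeral_eq_Suc)
  finally show ?thesis .
qed

lemma negV_a0: "d < 27 \<Longrightarrow> negV a0 d = K1 d"
proof -
  assume d: "d < 27"
  have "neg 27 (\<lambda>e. a0 e k) d = (\<Sum>e<27. (if e + d < 27 then 1 else -1 :: real)) * (a0 0 k * a0 0 k)" for k
    unfolding neg_def sum_distrib_right by (intro sum.cong refl) (subst a0_const, subst (2) a0_const, simp)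
  hence "negV a0 d = (\<Sum>k<31. (27 - 2 * real d) * (a0 0 k * a0 0 k))"
    unfolding negV_def using sum_sign_count[of d 27] d by simp
  also have "\<dots> = (27 - 2 * real d) * (\<Sum>k<31. a0 0 k * a0 0 k)" by (simp add: sum_distrib_left)
  also have "(\<Sum>k<31. a0 0 k * a0 0 k) = 1/27" by (simp add: a0_def lessThan_Suc numeral_eq_Suc)
  finally show ?thesis by (simp add: K1_def field_simps)
qed

lemma Gpre_val:
  assumes "b < 27" "c < 27" "s < 3"
  shows "Gpre s b c = (if s = 0 then 1 else if s = 1 then K1 (dst b c) else K2 (dst b c))"
proof -
  have main: "Gpre s b c = (if s = 0 then 1 else if s = 1 then K1 (c - b) else K2 (c - b))"
    if "b \<le> c" "c < 27" for b c
    using Gpre_le[OF that] that assms(3) a1_props[of "c - b"] a2_props[of "c - b"] cycV_a0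
    by (auto simp: aseq_def)
  show ?thesis
  proof (cases "b \<le> c")
    case True thus ?thesis using main[OF True assms(2)] by (simp add: dst_def)
  next
    case False thus ?thesis using main[of c b] assms Gpre_sym[of s b c] by (simp add: dst_def)
  qed
qed

lemma Gpost_val:
  assumes "b < 27" "c < 27" "s < 3"
  shows "Gpost s b c = (if s = 0 then K1 (dst b c) else if s = 1 then K2 (dst b c) else (if b = c then 1 else 0))"
proof -
  have main: "Gpost s b c = (if s = 0 then K1 (c - b) else if s = 1 then K2 (c - b) else (if b = c then 1 else 0))"
    if "b \<le> c" "c < 27" for b c
    using Gpost_le[OF that] that assms(3) a1_props[of "c - b"] a2_props[of "c - b"] negV_a0[of "c - b"]
    by (auto simp: aseq_def)
  show ?thesis
  proof (cases "b \<le> c")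
    case True thus ?thesis using main[OF True assms(2)] by (simp add: dst_def)
  next
    case False thus ?thesis using main[of c b] assms Gpost_sym[of s b c] by (simp add: dst_def)
  qed
qed

lemma key_arith:
  fixes f M J :: nat
  assumes M: "0 < M"
  shows "(f \<le> f div (27 * M) * (27 * M) + (J + 1) * M - 1) \<longleftrightarrow> (f div M) mod 27 \<le> J"
proof -
  define u where "u = f div M div 27"
  define v where "v = f div M mod 27"
  define m where "m = f mod M"
  have fd: "f div (27 * M) = u" unfolding u_def by (simp add: div_mult2_eq mult.commute)
  have f1: "f = f div M * M + m" unfolding m_def by simp
  have f2: "f div M = u * 27 + v" unfolding u_def v_def by simp
  have f3: "f = u * (27 * M) + v * M + m" using f1 f2 by (simp add: algebra_simps)
  have mM: "m < M" unfolding m_def using M by simp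
  have e: "(J + 1) * M = J * M + M" by simp
  show ?thesis
  proof
    assume h: "f \<le> f div (27 * M) * (27 * M) + (J + 1) * M - 1"
    show "f div M mod 27 \<le> J"
    proof (rule ccontr)
      assume "\<not> f div M mod 27 \<le> J"
      hence "J + 1 \<le> v" unfolding v_def by simp
      hence a: "(J + 1) * M \<le> v * M" by (rule mult_le_mono1)
      have b: "1 \<le> (J + 1) * M" using M by simp
      have h': "f \<le> u * (27 * M) + (J + 1) * M - 1" using h fd by simp
      show False using a b h' f3 by linarith
    qed
  next
    assume "f div M mod 27 \<le> J"
    hence a: "v * M \<le> J * M" unfolding v_def by (rule mult_le_mono1)
    have "f \<le> u * (27 * M) + (J + 1) * M - 1" using a f3 e mM by linarith
    thus "f \<le> f div (27 * M) * (27 * M) + (J + 1) * M - 1" using fd by simp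
  qed
qed

locale alg =
  fixes N :: nat
  assumes N2: "2 \<le> N"
begin

definition R :: nat where "R = (LEAST r. N \<le> 27 ^ r)"
definition T :: nat where "T = 3 * R"
definition Mr :: "nat \<Rightarrow> nat" where "Mr r = 27 ^ (R - 1 - r)"
definition pre :: "nat \<Rightarrow> nat \<Rightarrow> nat" where "pre r f = f div (27 * Mr r)"
definition dig :: "nat \<Rightarrow> nat \<Rightarrow> nat" where "dig r f = (f div Mr r) mod 27"
definition pos :: "nat \<Rightarrow> nat \<Rightarrow> nat \<Rightarrow> nat" where "pos r p J = p * (27 * Mr r) + (J + 1) * Mr r - 1"
definition idx :: "nat \<Rightarrow> nat \<Rightarrow> nat \<Rightarrow> nat" where "idx r p J = (if pos r p J < N then pos r p J else N)"
definition LAB :: "nat \<times> nat \<times> nat \<times> nat \<Rightarrow> nat \<times> nat" where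
  "LAB l = (case l of (q, p, J, k) \<Rightarrow> (Suc (prod_encode (q, prod_encode (p, prod_encode (J, k)))), idx (q div 3) p J))"
definition Lq :: "nat \<Rightarrow> nat \<Rightarrow> (nat \<times> nat \<times> nat \<times> nat) set" where
  "Lq q p = (\<lambda>(J, k). (q, p, J, k)) ` ({..<27} \<times> {..<31})"
definition cf :: "nat \<Rightarrow> nat \<Rightarrow> nat \<times> nat \<times> nat \<times> nat \<Rightarrow> real" where
  "cf q f l = (case l of (q', p, J, k) \<Rightarrow> emb (q mod 3) (dig (q div 3) f) J k)"
definition st :: "nat \<Rightarrow> nat \<Rightarrow> nat \<times> nat \<Rightarrow> real" where
  "st q f = (if q < T then vecL (Lq q (pre (q div 3) f)) LAB (cf q f) else vecL {(T, f, 0, 0)} LAB (\<lambda>_. 1))"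
definition PB :: nat where "PB = 27 ^ R"
definition Lall :: "(nat \<times> nat \<times> nat \<times> nat) set" where
  "Lall = {..T} \<times> {..<PB} \<times> {..<27} \<times> {..<31}"
definition BB :: "(nat \<times> nat) set" where "BB = insert (0, 0) (LAB ` Lall)"

lemma R_ex: "N \<le> 27 ^ N"
proof -
  have "N < 2 ^ N" by (rule less_exp)
  also have "(2::nat) ^ N \<le> 27 ^ N" by (rule power_mono) auto
  finally show ?thesis by simp
qed

lemma R_props: "1 \<le> R" "N \<le> 27 ^ R" "27 ^ (R - 1) < N"
proof -
  show N_le: "N \<le> 27 ^ R" unfolding R_def by (rule LeastI[of "\<lambda>r. N \<le> 27 ^ r", OF R_ex])
  show "1 \<le> R"
  proof (rule ccontr)
    assume "\<not> 1 \<le> R" hence "R = 0" by simp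
    thus False using N_le N2 by simp
  qed
  hence "R - 1 < R" by simp
  hence "\<not> N \<le> 27 ^ (R - 1)" unfolding R_def by (rule not_less_Least)
  thus "27 ^ (R - 1) < N" by simp
qed

lemma Mr_pos: "0 < Mr r" unfolding Mr_def by simp

lemma inj_LAB: "inj LAB"
proof (rule injI)
  fix x y assume "LAB x = LAB y"
  hence "fst (LAB x) = fst (LAB y)" by simp
  thus "x = y" unfolding LAB_def by (cases x, cases y) auto
qed

lemma LAB_fst: "fst (LAB l) \<noteq> 0" unfolding LAB_def by (cases l) auto

lemma finite_Lall: "finite Lall" unfolding Lall_def by simp
lemma finite_BB: "finite BB" unfolding BB_def using finite_Lall by simp
lemma finite_Lq: "finite (Lq q p)" unfolding Lq_def by simp

lemma Lq_sub: "q \<le> T \<Longrightarrow> p < PB \<Longrightarrow> Lq q p \<subseteq> Lall"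
  unfolding Lq_def Lall_def by auto

lemma pre_lt: "f < N \<Longrightarrow> pre r f < PB"
proof -
  assume "f < N"
  have "pre r f \<le> f" unfolding pre_def by simp
  also have "f < PB" using \<open>f < N\<close> R_props(2) unfolding PB_def by linarith
  finally show ?thesis .
qed

lemma LAB_sub: "L \<subseteq> Lall \<Longrightarrow> LAB ` L \<subseteq> BB"
  unfolding BB_def by auto

lemma st_form:
  assumes "q \<le> T" "f < N"
  shows "\<exists>L c. st q f = vecL L LAB c \<and> finite L \<and> L \<subseteq> Lall \<and> (\<forall>l\<in>L. fst l = q)"
proof (cases "q < T")
  case True
  thus ?thesis using Lq_sub[OF assms(1) pre_lt[OF assms(2)]] finite_Lq
    by (intro exI[of _ "Lq q (pre (q div 3) f)"] exI[of _ "cf q f"]) (auto simp: st_def Lq_def)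
next
  case False
  hence "q = T" using assms by simp
  moreover have "f < PB" using assms(2) R_props(2) unfolding PB_def by linarith
  ultimately show ?thesis using False
    by (intro exI[of _ "{(T, f, 0, 0)}"] exI[of _ "\<lambda>_. 1"]) (auto simp: st_def Lall_def)
qed

lemma supp_st: "q \<le> T \<Longrightarrow> f < N \<Longrightarrow> suppB BB (st q f)"
  using st_form LAB_sub suppB_vecL by metis

lemma ipr_diff_q:
  assumes "q \<le> T" "q' \<le> T" "q \<noteq> q'" "f < N" "g < N"
  shows "ipr BB (orc N f1 (st q f)) (orc N g1 (st q' g)) = 0" "ipr BB (st q f) (st q' g) = 0"
proof -
  obtain L c where L: "st q f = vecL L LAB c" "finite L" "L \<subseteq> Lall" "\<forall>l\<in>L. fst l = q"
    using st_form[OF assms(1,4)] by blast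
  obtain L' c' where L': "st q' g = vecL L' LAB c'" "finite L'" "L' \<subseteq> Lall" "\<forall>l\<in>L'. fst l = q'"
    using st_form[OF assms(2,5)] by blast
  have dis: "l \<in> L \<Longrightarrow> l \<notin> L'" for l using L(4) L'(4) assms(3) by auto
  show "ipr BB (orc N f1 (st q f)) (orc N g1 (st q' g)) = 0"
    unfolding L(1) L'(1) orc_vecL
    by (subst ipr_vecL2[OF finite_BB L(2) L'(2) inj_LAB LAB_sub[OF L(3)]]) (auto intro!: sum.neutral dest: dis)
  show "ipr BB (st q f) (st q' g) = 0"
    unfolding L(1) L'(1)
    by (subst ipr_vecL2[OF finite_BB L(2) L'(2) inj_LAB LAB_sub[OF L(3)]]) (auto intro!: sum.neutral dest: dis)
qed

lemma sum_Lq: "(\<Sum>l\<in>Lq q p. h l) = (\<Sum>J<27. \<Sum>k<31. h (q, p, J, k))"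
proof -
  have inj: "inj_on (\<lambda>x::nat \<times> nat. (q, p, x)) ({..<27} \<times> {..<31})" by (auto simp: inj_on_def)
  have "Lq q p = (\<lambda>x::nat \<times> nat. (q, p, x)) ` ({..<27} \<times> {..<31})" unfolding Lq_def
    by (auto simp: image_def)
  hence "(\<Sum>l\<in>Lq q p. h l) = (\<Sum>x\<in>{..<27::nat} \<times> {..<31::nat}. h (q, p, x))"
    by (simp add: sum.reindex[OF inj])
  also have "\<dots> = (\<Sum>(J, k)\<in>{..<27::nat} \<times> {..<31::nat}. h (q, p, J, k))"
    by (rule sum.cong) auto
  also have "\<dots> = (\<Sum>J<27. \<Sum>k<31. h (q, p, J, k))"
    by (simp add: sum.cartesian_product)
  finally show ?thesis .
qed

lemma Lq_mem: "l \<in> Lq q p \<Longrightarrow> l \<in> Lq q p' \<Longrightarrow> p = p'"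
  unfolding Lq_def by auto

lemma osg_pair:
  assumes "pre (q div 3) f = p" "pre (q div 3) g = p" "f < N" "g < N"
  shows "osg N f (LAB (q, p, J, k)) * osg N g (LAB (q, p, J, k)) = sgb (dig (q div 3) f) J * sgb (dig (q div 3) g) J"
proof -
  let ?r = "q div 3"
  have key: "f' \<le> pos ?r p J \<longleftrightarrow> dig ?r f' \<le> J" if "pre ?r f' = p" for f'
    using key_arith[OF Mr_pos[of ?r], of f' J] that unfolding pos_def pre_def dig_def by simp
  have snd: "snd (LAB (q, p, J, k)) = idx ?r p J" unfolding LAB_def by simp
  show ?thesis
  proof (cases "pos ?r p J < N")
    case True
    hence "osg N f' (LAB (q, p, J, k)) = sgb (dig ?r f') J" if "pre ?r f' = p" for f'
      using key[OF that] unfolding osg_def snd idx_def sgb_def by simp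
    thus ?thesis using assms by simp
  next
    case False
    hence o: "osg N f' (LAB (q, p, J, k)) = 1" for f' unfolding osg_def snd idx_def by simp
    have "sgb (dig ?r f') J = -1" if "pre ?r f' = p" "f' < N" for f'
      using key[OF that(1)] that(2) False unfolding sgb_def by simp
    thus ?thesis using assms o by simp
  qed
qed

lemma ipr_same:
  assumes "q < T" "f < N" "g < N"
  shows "ipr BB (st q f) (st q g) = (if pre (q div 3) f = pre (q div 3) g then Gpre (q mod 3) (dig (q div 3) f) (dig (q div 3) g) else 0)"
    and "ipr BB (orc N f (st q f)) (orc N g (st q g)) = (if pre (q div 3) f = pre (q div 3) g then Gpost (q mod 3) (dig (q div 3) f) (dig (q div 3) g) else 0)"
proof -
  let ?r = "q div 3"
  let ?p = "pre ?r f" and ?p' = "pre ?r g"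
  have sub: "LAB ` Lq q ?p \<subseteq> BB" by (rule LAB_sub[OF Lq_sub[OF less_imp_le[OF assms(1)] pre_lt[OF assms(2)]]])
  have stf: "st q f = vecL (Lq q ?p) LAB (cf q f)" and stg: "st q g = vecL (Lq q ?p') LAB (cf q g)"
    using assms(1) by (simp_all add: st_def)
  show "ipr BB (st q f) (st q g) = (if ?p = ?p' then Gpre (q mod 3) (dig ?r f) (dig ?r g) else 0)"
  proof (cases "?p = ?p'")
    case True
    have "ipr BB (st q f) (st q g) = (\<Sum>l\<in>Lq q ?p. cf q f l * cf q g l)"
      unfolding stf stg ipr_vecL2[OF finite_BB finite_Lq finite_Lq inj_LAB sub] using True by simp
    also have "\<dots> = Gpre (q mod 3) (dig ?r f) (dig ?r g)"
      unfolding sum_Lq Gpre_def cf_def by simp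
    finally show ?thesis using True by simp
  next
    case False
    have "ipr BB (st q f) (st q g) = 0"
      unfolding stf stg ipr_vecL2[OF finite_BB finite_Lq finite_Lq inj_LAB sub]
      using False Lq_mem by (auto intro!: sum.neutral)
    thus ?thesis using False by simp
  qed
  show "ipr BB (orc N f (st q f)) (orc N g (st q g)) = (if ?p = ?p' then Gpost (q mod 3) (dig ?r f) (dig ?r g) else 0)"
  proof (cases "?p = ?p'")
    case True
    have "ipr BB (orc N f (st q f)) (orc N g (st q g)) =
          (\<Sum>l\<in>Lq q ?p. (osg N f (LAB l) * cf q f l) * (osg N g (LAB l) * cf q g l))"
      unfolding stf stg orc_vecL ipr_vecL2[OF finite_BB finite_Lq finite_Lq inj_LAB sub] using True by simp
    also have "\<dots> = (\<Sum>J<27. \<Sum>k<31. (osg N f (LAB (q, ?p, J, k)) * osg N g (LAB (q, ?p, J, k))) * (cf q f (q, ?p, J, k) * cf q g (q, ?p, J, k)))"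
      unfolding sum_Lq by (simp add: mult_ac)
    also have "\<dots> = Gpost (q mod 3) (dig ?r f) (dig ?r g)"
      unfolding Gpost_def cf_def using osg_pair[OF refl True[symmetric] assms(2,3)] by simp
    finally show ?thesis using True by simp
  next
    case False
    have "ipr BB (orc N f (st q f)) (orc N g (st q g)) = 0"
      unfolding stf stg orc_vecL ipr_vecL2[OF finite_BB finite_Lq finite_Lq inj_LAB sub]
      using False Lq_mem by (auto intro!: sum.neutral)
    thus ?thesis using False by simp
  qed
qed

lemma ipr_final:
  assumes "f < N" "g < N"
  shows "ipr BB (st T f) (st T g) = (if f = g then 1 else 0)"
proof -
  have fP: "f < PB" using assms(1) R_props(2) unfolding PB_def by linarith
  have sub: "LAB ` {(T, f, 0, 0)} \<subseteq> BB" using fP unfolding BB_def Lall_def by auto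
  show ?thesis unfolding st_def using ipr_vecL2[OF finite_BB _ _ inj_LAB sub, of "{(T, g, 0, 0)}" "\<lambda>_. 1" "\<lambda>_. 1"]
    by simp
qed

lemma digit_step:
  assumes "r < R"
  shows "(pre r f = pre r g \<and> dig r f = dig r g) \<longleftrightarrow> (if r + 1 < R then pre (r + 1) f = pre (r + 1) g else f = g)"
proof -
  have x: "(x div 27 = y div 27 \<and> x mod 27 = y mod 27) \<longleftrightarrow> x = y" for x y :: nat
    by (metis div_mult_mod_eq)
  have pd: "pre r f' = f' div Mr r div 27" "dig r f' = f' div Mr r mod 27" for f'
    unfolding pre_def dig_def by (simp_all add: div_mult2_eq mult.commute)
  show ?thesis
  proof (cases "r + 1 < R")
    case True
    have e: "R - 1 - r = Suc (R - 1 - (r + 1))" using True by simp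
    have "Mr r = 27 * Mr (r + 1)" unfolding Mr_def e by simp
    hence "pre (r + 1) f' = f' div Mr r" for f' unfolding pre_def by simp
    thus ?thesis using True pd x by simp
  next
    case False
    hence "Mr r = 1" unfolding Mr_def using assms by simp
    thus ?thesis using False pd x by simp
  qed
qed

end

context alg
begin

lemma q_facts: "q < T \<Longrightarrow> q div 3 < R" unfolding T_def by simp

lemma dig_lt: "dig r f < 27" unfolding dig_def by simp

lemma transition:
  assumes "q < T" "f < N" "g < N"
  shows "ipr BB (orc N f (st q f)) (orc N g (st q g)) = ipr BB (st (q + 1) f) (st (q + 1) g)"
proof -
  define r where "r = q div 3"
  define s where "s = q mod 3"
  have q: "q = 3 * r + s" unfolding r_def s_def by simp
  have s3: "s < 3" unfolding s_def by simp
  have rR: "r < R" using assms(1) unfolding r_def T_def by simp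
  have L: "ipr BB (orc N f (st q f)) (orc N g (st q g)) = (if pre r f = pre r g then Gpost s (dig r f) (dig r g) else 0)"
    using ipr_same(2)[OF assms] unfolding r_def s_def .
  consider "s = 0" | "s = 1" | "s = 2" using s3 by linarith
  thus ?thesis
  proof cases
    case 1
    have q1: "q + 1 < T" using q 1 rR unfolding T_def by presburger
    have q2: "(q + 1) div 3 = r" using q 1 rR by presburger
    have q3: "(q + 1) mod 3 = 1" using q 1 rR by presburger
    show ?thesis unfolding L using ipr_same(1)[OF q1 assms(2,3)] q2 q3 1
      by (simp add: Gpost_val[OF dig_lt dig_lt] Gpre_val[OF dig_lt dig_lt])
  next
    case 2
    have q1: "q + 1 < T" using q 2 rR unfolding T_def by presburger
    have q2: "(q + 1) div 3 = r" using q 2 rR by presburger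
    have q3: "(q + 1) mod 3 = 2" using q 2 rR by presburger
    show ?thesis unfolding L using ipr_same(1)[OF q1 assms(2,3)] q2 q3 2
      by (simp add: Gpost_val[OF dig_lt dig_lt] Gpre_val[OF dig_lt dig_lt])
  next
    case 3
    have Lv: "ipr BB (orc N f (st q f)) (orc N g (st q g)) = (if pre r f = pre r g \<and> dig r f = dig r g then 1 else 0)"
      unfolding L using 3 by (auto simp: Gpost_val[OF dig_lt dig_lt])
    show ?thesis
    proof (cases "r + 1 < R")
      case True
      have q1: "q + 1 < T" using q 3 True unfolding T_def by presburger
    have q2: "(q + 1) div 3 = r + 1" using q 3 True by presburger
    have q3: "(q + 1) mod 3 = 0" using q 3 True by presburger
      show ?thesis unfolding Lv digit_step[OF rR] using ipr_same(1)[OF q1 assms(2,3)] q2 q3 True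
        by (simp add: Gpre_val[OF dig_lt dig_lt])
    next
      case False
      have q1: "q + 1 = T" using q 3 False rR unfolding T_def by presburger
      show ?thesis unfolding Lv digit_step[OF rR] q1 ipr_final[OF assms(2,3)] using False by simp
    qed
  qed
qed

definition rket :: "nat \<times> nat \<Rightarrow> real" where "rket = (\<lambda>a. if a = (0, 0) then 1 else 0)"

lemma zero_in_BB: "(0, 0) \<in> BB" unfolding BB_def by simp

lemma supp_rket: "suppB BB rket" unfolding suppB_def rket_def using zero_in_BB by auto

lemma ipr_rket: "ipr BB rket v = v (0, 0)"
proof -
  have pt: "rket a * v a = (if a = (0, 0) then v a else 0)" for a by (simp add: rket_def)
  show ?thesis unfolding ipr_def pt using finite_BB zero_in_BB by (simp add: sum.delta')
qed

lemma st_zero: "q \<le> T \<Longrightarrow> f < N \<Longrightarrow> st q f (0, 0) = 0"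
proof -
  assume "q \<le> T" "f < N"
  then obtain L c where L: "st q f = vecL L LAB c" using st_form by blast
  have "(0, 0) \<notin> LAB ` L" using LAB_fst by (metis fst_conv imageE)
  thus ?thesis unfolding L by (rule vecL_out)
qed

lemma orc_zero: "orc N f v (0, 0) = osg N f (0,0) * v (0, 0)" unfolding orc_def by simp

definition pairs :: "((nat \<times> nat \<Rightarrow> real) \<times> (nat \<times> nat \<Rightarrow> real)) list" where
  "pairs = (rket, st 0 0) # map (\<lambda>(q, f). (orc N f (st q f), st (q + 1) f)) (List.product [0..<T] [0..<N])"

lemma N_pos: "0 < N" using N2 by simp

lemma pairs_set0: "set pairs = insert (rket, st 0 0) ((\<lambda>(q, f). (orc N f (st q f), st (q + 1) f)) ` ({..<T} \<times> {..<N}))"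
  unfolding pairs_def by (simp add: lessThan_atLeast0)

lemma pairs_set: "p \<in> set pairs \<longleftrightarrow> p = (rket, st 0 0) \<or> (\<exists>q f. q < T \<and> f < N \<and> p = (orc N f (st q f), st (q + 1) f))"
  unfolding pairs_set0 by (auto simp: image_iff)

lemma pairs_supp: "\<forall>p\<in>set pairs. suppB BB (fst p) \<and> suppB BB (snd p)"
proof
  fix p assume "p \<in> set pairs"
  then consider "p = (rket, st 0 0)" | q f where "q < T" "f < N" "p = (orc N f (st q f), st (q + 1) f)"
    unfolding pairs_set by blast
  thus "suppB BB (fst p) \<and> suppB BB (snd p)"
  proof cases
    case 1 thus ?thesis using supp_rket supp_st[of 0 0] N_pos by simp
  next
    case (2 q f) thus ?thesis using supp_st[of q f] supp_st[of "q + 1" f] suppB_orc by simp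
  qed
qed

lemma ipr_st0_other: "q < T \<Longrightarrow> f < N \<Longrightarrow> ipr BB (st 0 0) (st (q + 1) f) = 0"
  using ipr_diff_q(2)[of 0 "q + 1" 0 f] N_pos by simp

lemma pairs_gram: "\<forall>p\<in>set pairs. \<forall>p'\<in>set pairs. ipr BB (fst p) (fst p') = ipr BB (snd p) (snd p')"
proof (intro ballI)
  fix p p' assume p: "p \<in> set pairs" and p': "p' \<in> set pairs"
  have T0: "0 < T" using R_props(1) unfolding T_def by simp
  have A1: "ipr BB rket rket = 1" unfolding ipr_rket by (simp add: rket_def)
  have A2: "ipr BB (st 0 0) (st 0 0) = 1"
    using ipr_same(1)[OF T0 N_pos N_pos] by (simp add: Gpre_val[OF dig_lt dig_lt])
  have A: "ipr BB rket rket = ipr BB (st 0 0) (st 0 0)" using A1 A2 by simp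
  have B: "ipr BB rket (orc N f (st q f)) = ipr BB (st 0 0) (st (q + 1) f)" if "q < T" "f < N" for q f
  proof -
    have "ipr BB rket (orc N f (st q f)) = 0"
      using st_zero[of q f] that by (simp add: ipr_rket orc_zero)
    moreover have "ipr BB (st 0 0) (st (q + 1) f) = 0" by (rule ipr_st0_other[OF that])
    ultimately show ?thesis by simp
  qed
  have B': "ipr BB (orc N f (st q f)) rket = ipr BB (st (q + 1) f) (st 0 0)" if "q < T" "f < N" for q f
    using B[OF that] by (simp add: ipr_comm)
  have C: "ipr BB (orc N f (st q f)) (orc N g (st q' g)) = ipr BB (st (q + 1) f) (st (q' + 1) g)"
    if "q < T" "f < N" "q' < T" "g < N" for q f q' g
  proof (cases "q = q'")
    case True thus ?thesis using transition[OF that(1,2,4)] by simp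
  next
    case False
    thus ?thesis using ipr_diff_q(1)[of q q' f g f g] ipr_diff_q(2)[of "q+1" "q'+1" f g] that by simp
  qed
  show "ipr BB (fst p) (fst p') = ipr BB (snd p) (snd p')"
    using p p' A B B' C unfolding pairs_set by auto
qed

lemma exists_M: "\<exists>M. orthr BB M \<and> (\<forall>p\<in>set pairs. mvr BB M (fst p) = snd p)"
  by (rule extend_orth[OF finite_BB pairs_supp pairs_gram])

end

definition outf :: "nat \<times> nat \<Rightarrow> nat" where
  "outf a = fst (prod_decode (snd (prod_decode (fst a - 1))))"

definition Uc :: "('a \<Rightarrow> 'a \<Rightarrow> real) \<Rightarrow> 'a \<Rightarrow> 'a \<Rightarrow> complex" where
  "Uc M = (\<lambda>a b. complex_of_real (M a b))"

lemma unitary_Uc: "orthr B M \<Longrightarrow> unitary_on B (Uc M)"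
  unfolding unitary_on_def orthr_def Uc_def
  by (simp flip: of_real_mult of_real_sum)

lemma apply_bridge:
  assumes "suppB B v"
  shows "apply_mat B (Uc M) (\<lambda>a. complex_of_real (v a)) = (\<lambda>a. complex_of_real (mvr B M v a))"
proof
  fix a
  show "apply_mat B (Uc M) (\<lambda>a. complex_of_real (v a)) a = complex_of_real (mvr B M v a)"
  proof (cases "a \<in> B")
    case True thus ?thesis unfolding apply_mat_def mvr_def Uc_def
      by (simp flip: of_real_mult of_real_sum)
  next
    case False
    hence "v a = 0" using assms unfolding suppB_def by blast
    thus ?thesis using False unfolding apply_mat_def mvr_def by simp
  qed
qed

lemma phase_bridge:
  assumes "\<forall>i<N. x i = (f \<le> i)"
  shows "phase_oracle N x (\<lambda>a. complex_of_real (v a)) = (\<lambda>a. complex_of_real (orc N f v a))"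
proof
  fix a :: "nat \<times> nat"
  obtain z i where a: "a = (z, i)" by force
  show "phase_oracle N x (\<lambda>a. complex_of_real (v a)) a = complex_of_real (orc N f v a)"
    unfolding a phase_oracle_def orc_def osg_def using assms by auto
qed

lemma adm_facts:
  assumes "2 \<le> N" "monotone_input N x"
  shows "first_one N x < N" "\<forall>i<N. x i = (first_one N x \<le> i)"
proof -
  have ex: "N - 1 < N \<and> x (N - 1)" using assms unfolding monotone_input_def by auto
  have l: "first_one N x < N \<and> x (first_one N x)"
    unfolding first_one_def by (rule LeastI[of "\<lambda>i. i < N \<and> x i", OF ex])
  thus "first_one N x < N" by simp
  show "\<forall>i<N. x i = (first_one N x \<le> i)"
  proof (intro allI impI)
    fix i assume i: "i < N"
    show "x i = (first_one N x \<le> i)"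
    proof
      assume "x i"
      hence "\<not> i < first_one N x" unfolding first_one_def using i by (metis not_less_Least)
      thus "first_one N x \<le> i" by simp
    next
      assume "first_one N x \<le> i"
      thus "x i" using l i assms(2) unfolding monotone_input_def by blast
    qed
  qed
qed

context alg
begin

lemma st0_indep:
  assumes "f < N"
  shows "st 0 f = st 0 0"
proof -
  have T0: "0 < T" using R_props(1) unfolding T_def by simp
  have M0: "27 * Mr 0 = 27 ^ R" unfolding Mr_def using R_props(1)
    by (metis diff_zero power_eq_if not_one_le_zero)
  have fl: "f < 27 ^ R" using assms R_props(2) by linarith
  have p1: "pre 0 f = 0" unfolding pre_def M0 using fl by (rule div_less)
  have p2: "pre 0 0 = 0" unfolding pre_def by simp
  have c: "cf 0 f = cf 0 0" unfolding cf_def emb_def aseq_def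
    by (rule ext) (auto simp: a0_def split: prod.split)
  show ?thesis unfolding st_def using T0 p1 p2 c by simp
qed

lemma mvr_pairs:
  assumes "orthr BB M \<and> (\<forall>p\<in>set pairs. mvr BB M (fst p) = snd p)"
  shows "mvr BB M rket = st 0 0" "q < T \<Longrightarrow> f < N \<Longrightarrow> mvr BB M (orc N f (st q f)) = st (q + 1) f"
proof -
  have m0: "(rket, st 0 0) \<in> set pairs" by (simp add: pairs_set)
  show "mvr BB M rket = st 0 0" using bspec[OF conjunct2[OF assms] m0] by simp
  assume "q < T" "f < N"
  hence m1: "(orc N f (st q f), st (q + 1) f) \<in> set pairs" unfolding pairs_set by blast
  show "mvr BB M (orc N f (st q f)) = st (q + 1) f" using bspec[OF conjunct2[OF assms] m1] by simp
qed

lemma ket_bridge: "ket (0, 0) = (\<lambda>a. complex_of_real (rket a))"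
  unfolding ket_def rket_def by auto

lemma run_st:
  assumes M: "orthr BB M \<and> (\<forall>p\<in>set pairs. mvr BB M (fst p) = snd p)"
    and x: "\<forall>i<N. x i = (f \<le> i)" and f: "f < N"
  shows "t \<le> T \<Longrightarrow> ((apply_mat BB (Uc M) \<circ> phase_oracle N x) ^^ t) (apply_mat BB (Uc M) (ket (0, 0)))
           = (\<lambda>a. complex_of_real (st t f a))"
proof (induction t)
  case 0
  show ?case unfolding ket_bridge apply_bridge[OF supp_rket] mvr_pairs(1)[OF M] st0_indep[OF f] by simp
next
  case (Suc t)
  hence t: "t < T" by simp
  have IH: "((apply_mat BB (Uc M) \<circ> phase_oracle N x) ^^ t) (apply_mat BB (Uc M) (ket (0, 0)))
        = (\<lambda>a. complex_of_real (st t f a))" by (rule Suc.IH) (use t in simp)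
  have "((apply_mat BB (Uc M) \<circ> phase_oracle N x) ^^ Suc t) (apply_mat BB (Uc M) (ket (0, 0)))
        = apply_mat BB (Uc M) (phase_oracle N x (((apply_mat BB (Uc M) \<circ> phase_oracle N x) ^^ t) (apply_mat BB (Uc M) (ket (0, 0)))))"
    by simp
  also have "\<dots> = apply_mat BB (Uc M) (phase_oracle N x (\<lambda>a. complex_of_real (st t f a)))"
    by (simp only: IH)
  also have "\<dots> = (\<lambda>a. complex_of_real (st (Suc t) f a))"
    unfolding phase_bridge[OF x] apply_bridge[OF suppB_orc[OF supp_st[OF less_imp_le[OF t] f]]]
    using mvr_pairs(2)[OF M t f] by simp
  finally show ?case .
qed

lemma outf_LAB: "outf (LAB (q, f, J, k)) = f"
  unfolding outf_def LAB_def by simp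

lemma final_support:
  assumes "st T f a \<noteq> 0"
  shows "a = LAB (T, f, 0, 0)"
proof (rule ccontr)
  assume "a \<noteq> LAB (T, f, 0, 0)"
  hence "a \<notin> LAB ` {(T, f, 0, 0)}" by simp
  hence "st T f a = 0" unfolding st_def by (simp add: vecL_out)
  thus False using assms by simp
qed

lemma T_bound: "real T \<le> log 3 (real N) + 3"
proof -
  have a: "(27::real) ^ (R - 1) < real N" using R_props(3)
    by (metis of_nat_less_iff of_nat_numeral of_nat_power)
  have b: "(27::real) ^ (R - 1) = 3 ^ (3 * (R - 1))" by (simp add: power_mult)
  have a': "(3::real) ^ (3 * (R - 1)) < real N" using a unfolding b .
  have Np: "0 < real N" using N2 by simp
  have "real (3 * (R - 1)) = log 3 (3 ^ (3 * (R - 1)))" by simp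
  also have "\<dots> < log 3 (real N)" using a' Np by (subst log_less_cancel_iff) auto
  finally have "real (3 * (R - 1)) < log 3 (real N)" .
  thus ?thesis unfolding T_def using R_props(1) by (simp add: of_nat_diff)
qed

end

theorem theorem4:
  "\<exists>C::real. \<forall>N::nat. N \<ge> 2 \<longrightarrow>
     (\<exists>(B::(nat \<times> nat) set) U T (out :: nat \<times> nat \<Rightarrow> nat).
        finite B \<and> (0, 0) \<in> B \<and> unitary_on B U \<and>
        exact_on B U N T out (monotone_input N) (first_one N) \<and>
        real T \<le> log 3 (real N) + C)"
proof (intro exI[of _ 3] allI impI)
  fix N :: nat assume N2: "N \<ge> 2"
  interpret alg N by unfold_locales (use N2 in simp)
  obtain M where M: "orthr BB M \<and> (\<forall>p\<in>set pairs. mvr BB M (fst p) = snd p)"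
    using exists_M by blast
  have ex: "exact_on BB (Uc M) N T outf (monotone_input N) (first_one N)"
    unfolding exact_on_def
  proof (intro allI impI)
    fix x a assume adm: "monotone_input N x" and nz: "run BB (Uc M) N x T a \<noteq> 0"
    let ?f = "first_one N x"
    have f: "?f < N" and x: "\<forall>i<N. x i = (?f \<le> i)" using adm_facts[OF N2 adm] by auto
    have "run BB (Uc M) N x T = (\<lambda>a. complex_of_real (st T ?f a))"
      unfolding run_def using run_st[OF M x f, of T] by simp
    hence "st T ?f a \<noteq> 0" using nz by simp
    hence "a = LAB (T, ?f, 0, 0)" by (rule final_support)
    thus "outf a = ?f" by (simp add: outf_LAB)
  qed
  show "\<exists>(B::(nat \<times> nat) set) U T (out :: nat \<times> nat \<Rightarrow> nat).
        finite B \<and> (0, 0) \<in> B \<and> unitary_on B U \<and>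
        exact_on B U N T out (monotone_input N) (first_one N) \<and>
        real T \<le> log 3 (real N) + 3"
    using finite_BB zero_in_BB unitary_Uc[of BB M] M ex T_bound by blast
qed

end
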